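(* Let $\Lambda_f$ be a uniformly random numerical semigroup with Frobenius number $f$. There are constants $\mu_0$ and $\mu_1$ such that, as $f \to \infty$, the expected value $\mathbb{E}[m(\Lambda_f)] - f/2$ converges to $\mu_0$ along even $f$ and to $\mu_1$ along odd $f$.
   Context: A numerical semigroup is a subset $\Lambda \subseteq \mathbb{N}_0$ containing $0$, closed under addition, with finite complement; its multiplicity $m(\Lambda)$ is $\min(\Lambda\setminus\{0\})$, its conductor is the least $c$ with $c + \mathbb{N}_0 \subseteq \Lambda$, and its Frobenius number is the conductor minus $1$. *)

theory Defs
  imports Complex_Main
begin

definition numerical_semigroup :: "nat set \<Rightarrow> bool" where
  "numerical_semigroup S \<longleftrightarrow> 0 \<in> S \<and> (\<forall>a\<in>S. \<forall>b\<in>S. a + b \<in> S) \<and> finite (UNIV - S)"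

definition multiplicity_ns :: "nat set \<Rightarrow> nat" where
  "multiplicity_ns S = (LEAST n. n \<in> S \<and> n \<noteq> 0)"

definition conductor :: "nat set \<Rightarrow> nat" where
  "conductor S = (LEAST c. \<forall>n\<ge>c. n \<in> S)"

definition frobenius :: "nat set \<Rightarrow> int" where
  "frobenius S = int (conductor S) - 1"

definition semigroups_frob :: "nat \<Rightarrow> nat set set" where
  "semigroups_frob f = {S. numerical_semigroup S \<and> frobenius S = int f}"

definition expected_multiplicity :: "nat \<Rightarrow> real" where
  "expected_multiplicity f =
     (\<Sum>S\<in>semigroups_frob f. real (multiplicity_ns S)) / real (card (semigroups_frob f))"

end

theory Submission
  imports Defs "HOL-Library.FuncSet" "HOL-Analysis.Uniform_Limit"
begin

definition good :: "nat \<Rightarrow> nat set \<Rightarrow> bool" where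
  "good f P \<longleftrightarrow> P \<subseteq> {1..<f} \<and> (\<forall>x\<in>P. \<forall>y\<in>P. x + y < f \<longrightarrow> x + y \<in> P) \<and> (\<forall>x\<in>P. \<forall>y\<in>P. x + y \<noteq> f)"

definition sg :: "nat \<Rightarrow> nat set \<Rightarrow> nat set" where
  "sg f P = insert 0 (P \<union> {f<..})"

definition mu :: "nat \<Rightarrow> nat set \<Rightarrow> nat" where
  "mu f P = (if P = {} then f + 1 else Min P)"

lemma good_finite: "good f P \<Longrightarrow> finite P"
  unfolding good_def by (meson finite_atLeastLessThan finite_subset)

lemma conductor_sg:
  assumes "good f P" "f \<ge> 1"
  shows "conductor (sg f P) = f + 1"
  unfolding conductor_def
proof (rule Least_equality)
  show "\<forall>n\<ge>f + 1. n \<in> sg f P" by (auto simp: sg_def)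
next
  fix c assume c: "\<forall>n\<ge>c. n \<in> sg f P"
  show "f + 1 \<le> c"
  proof (rule ccontr)
    assume "\<not> f + 1 \<le> c"
    then have "f \<in> sg f P" using c by auto
    moreover have "f \<notin> P" using assms unfolding good_def by auto
    ultimately show False using assms by (auto simp: sg_def)
  qed
qed

lemma sg_in:
  assumes "good f P" "f \<ge> 1"
  shows "sg f P \<in> semigroups_frob f"
proof -
  have ns: "numerical_semigroup (sg f P)"
    unfolding numerical_semigroup_def
  proof (intro conjI ballI)
    show "0 \<in> sg f P" by (simp add: sg_def)
  next
    fix a b assume a: "a \<in> sg f P" and b: "b \<in> sg f P"
    show "a + b \<in> sg f P"
    proof (cases "a = 0 \<or> b = 0")
      case True then show ?thesis using a b by auto
    next
      case False
      then have a': "a \<in> P \<or> a > f" and b': "b \<in> P \<or> b > f" using a b by (auto simp: sg_def)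
      show ?thesis
      proof (cases "a + b < f")
        case True
        then have "a \<in> P" "b \<in> P" using a' b' by auto
        then show ?thesis using True assms(1) unfolding good_def sg_def by auto
      next
        case False
        have "a + b \<noteq> f"
        proof
          assume "a + b = f"
          then have "a \<in> P" "b \<in> P" using a' b' by auto
          then show False using \<open>a + b = f\<close> assms(1) unfolding good_def by auto
        qed
        then show ?thesis using False by (auto simp: sg_def)
      qed
    qed
  next
    have "UNIV - sg f P \<subseteq> {..f}" by (auto simp: sg_def)
    then show "finite (UNIV - sg f P)" using finite_subset by blast
  qed
  show ?thesis unfolding semigroups_frob_def frobenius_def
    using ns conductor_sg[OF assms] by simp
qed

lemma mult_sg:
  assumes "good f P" "f \<ge> 1"
  shows "multiplicity_ns (sg f P) = mu f P"
proof (cases "P = {}")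
  case True
  then show ?thesis unfolding multiplicity_ns_def mu_def sg_def
    by (intro Least_equality) auto
next
  case False
  have fin: "finite P" using good_finite[OF assms(1)] .
  have M: "Min P \<in> P" using Min_in[OF fin False] .
  have Mlt: "Min P < f" "Min P \<ge> 1" using M assms(1) unfolding good_def by auto
  show ?thesis unfolding multiplicity_ns_def mu_def using False
  proof (simp, intro Least_equality)
    show "Min P \<in> sg f P \<and> 0 < Min P" using M Mlt by (auto simp: sg_def)
  next
    fix y assume y: "y \<in> sg f P \<and> 0 < y"
    then have "y \<in> P \<or> y > f" by (auto simp: sg_def)
    then show "Min P \<le> y" using fin Mlt by auto
  qed
qed

lemma frob_decomp:
  assumes S: "S \<in> semigroups_frob f" and f1: "f \<ge> 1"
  shows "good f (S \<inter> {1..<f}) \<and> S = sg f (S \<inter> {1..<f})"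
proof -
  have ns: "numerical_semigroup S" and fr: "frobenius S = int f"
    using S unfolding semigroups_frob_def by auto
  have c: "conductor S = f + 1" using fr unfolding frobenius_def by simp
  have z: "0 \<in> S" and cl: "\<And>a b. a \<in> S \<Longrightarrow> b \<in> S \<Longrightarrow> a + b \<in> S" and fin: "finite (UNIV - S)"
    using ns unfolding numerical_semigroup_def by auto
  have ex: "\<exists>c. \<forall>n\<ge>c. n \<in> S"
  proof -
    obtain N where "\<forall>x\<in>UNIV - S. x \<le> N" using fin finite_nat_set_iff_bounded_le by blast
    then have "\<forall>n\<ge>Suc N. n \<in> S" by force
    then show ?thesis by blast
  qed
  have up: "\<forall>n\<ge>f+1. n \<in> S" using LeastI_ex[OF ex] c unfolding conductor_def by simp
  have nf: "f \<notin> S"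
  proof
    assume "f \<in> S"
    then have "\<forall>n\<ge>f. n \<in> S" using up by (metis Suc_eq_plus1 le_antisym not_less_eq_eq)
    then have "conductor S \<le> f" unfolding conductor_def by (rule Least_le)
    then show False using c by simp
  qed
  have g: "good f (S \<inter> {1..<f})"
    unfolding good_def
  proof (intro conjI ballI impI)
    fix x y assume x: "x \<in> S \<inter> {1..<f}" and y: "y \<in> S \<inter> {1..<f}"
    { assume "x + y < f" then show "x + y \<in> S \<inter> {1..<f}" using x y cl by auto }
    show "x + y \<noteq> f" using x y cl nf by auto
  qed auto
  have "S = sg f (S \<inter> {1..<f})"
  proof
    show "S \<subseteq> sg f (S \<inter> {1..<f})"
    proof
      fix x assume "x \<in> S"
      then show "x \<in> sg f (S \<inter> {1..<f})" using nf
        by (cases x f rule: linorder_cases) (auto simp: sg_def)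
    qed
    show "sg f (S \<inter> {1..<f}) \<subseteq> S" using z up by (auto simp: sg_def)
  qed
  then show ?thesis using g by simp
qed

lemma sg_inj:
  assumes "good f P" shows "sg f P \<inter> {1..<f} = P"
  using assms unfolding good_def sg_def by auto

lemma frob_image:
  assumes "f \<ge> 1"
  shows "semigroups_frob f = sg f ` {P. good f P}"
proof
  show "semigroups_frob f \<subseteq> sg f ` {P. good f P}"
    using frob_decomp[OF _ assms] by blast
  show "sg f ` {P. good f P} \<subseteq> semigroups_frob f"
    using sg_in[OF _ assms] by blast
qed

lemma inj_sg: "inj_on (sg f) {P. good f P}"
  by (rule inj_onI) (metis mem_Collect_eq sg_inj)

lemma finite_good: "finite {P. good f P}"
proof -
  have "{P. good f P} \<subseteq> Pow {1..<f}" unfolding good_def by auto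
  then show ?thesis by (rule finite_subset) simp
qed

lemma expected_eq:
  assumes "f \<ge> 1"
  shows "expected_multiplicity f =
     (\<Sum>P\<in>{P. good f P}. real (mu f P)) / real (card {P. good f P})"
proof -
  have "(\<Sum>S\<in>semigroups_frob f. real (multiplicity_ns S)) = (\<Sum>P\<in>{P. good f P}. real (multiplicity_ns (sg f P)))"
    unfolding frob_image[OF assms] by (rule sum.reindex[OF inj_sg, unfolded comp_def])
  also have "\<dots> = (\<Sum>P\<in>{P. good f P}. real (mu f P))"
    using mult_sg[OF _ assms] by simp
  finally have 1: "(\<Sum>S\<in>semigroups_frob f. real (multiplicity_ns S)) = (\<Sum>P\<in>{P. good f P}. real (mu f P))" .
  have 2: "card (semigroups_frob f) = card {P. good f P}"
    unfolding frob_image[OF assms] by (rule card_image[OF inj_sg])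
  show ?thesis unfolding expected_multiplicity_def 1 2 ..
qed


definition Af :: "nat \<Rightarrow> nat \<Rightarrow> nat" where
  "Af f m = card {P. good f P \<and> mu f P = m}"

definition Qs :: "nat \<Rightarrow> nat \<Rightarrow> nat set set" where
  "Qs f m = (\<lambda>P. P \<inter> {..<f-m}) ` {P. good f P \<and> mu f P = m}"

definition FF :: "nat \<Rightarrow> nat \<Rightarrow> nat set \<Rightarrow> nat set" where
  "FF f m Q = {z. \<exists>x\<in>Q. \<exists>y\<in>Q. z = x + y} \<inter> {f-m<..<f}"

lemma good_mu_props:
  assumes "good f P" "mu f P = m" "m < f"
  shows "P \<noteq> {}" "m \<in> P" "\<And>x. x \<in> P \<Longrightarrow> m \<le> x" "m \<ge> 1" "P \<subseteq> {m..<f}"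
proof -
  show ne: "P \<noteq> {}" using assms unfolding mu_def by auto
  have fin: "finite P" using good_finite[OF assms(1)] .
  have mm: "Min P = m" using assms ne unfolding mu_def by auto
  show "m \<in> P" using Min_in[OF fin ne] mm by simp
  show "\<And>x. x \<in> P \<Longrightarrow> m \<le> x" using fin mm by auto
  then show "m \<ge> 1" "P \<subseteq> {m..<f}" using \<open>m \<in> P\<close> assms(1) unfolding good_def by auto
qed

lemma finite_Gm: "finite {P. good f P \<and> mu f P = m}"
  by (rule finite_subset[OF _ finite_good]) auto

lemma mu_range:
  assumes "good f P" "f \<ge> 1"
  shows "mu f P \<in> {1..<f} \<union> {f+1}"
proof (cases "P = {}")
  case True then show ?thesis by (simp add: mu_def)
next
  case False
  have "Min P \<in> P" using Min_in[OF good_finite[OF assms(1)] False] .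
  then show ?thesis using False assms(1) unfolding mu_def good_def by auto
qed

lemma card_good_sum:
  assumes "f \<ge> 1"
  shows "card {P. good f P} = (\<Sum>m\<in>{1..f+1}. Af f m)"
proof -
  have "(\<Sum>m\<in>{1..f+1}. Af f m) = (\<Sum>m\<in>{1..f+1}. \<Sum>P\<in>{P\<in>{P. good f P}. mu f P = m}. 1)"
    unfolding Af_def by simp
  also have "\<dots> = (\<Sum>P\<in>{P. good f P}. 1)"
    by (rule sum.group[OF finite_good]) (use mu_range[OF _ assms] in fastforce)+
  finally show ?thesis by simp
qed

lemma sum_mu_eq:
  assumes "f \<ge> 1"
  shows "(\<Sum>P\<in>{P. good f P}. g (mu f P)) = (\<Sum>m\<in>{1..f+1}. g m * real (Af f m))"
proof -
  have "(\<Sum>m\<in>{1..f+1}. g m * real (Af f m)) = (\<Sum>m\<in>{1..f+1}. \<Sum>P\<in>{P\<in>{P. good f P}. mu f P = m}. g (mu f P))"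
    unfolding Af_def by (intro sum.cong refl) auto
  also have "\<dots> = (\<Sum>P\<in>{P. good f P}. g (mu f P))"
    by (rule sum.group[OF finite_good]) (use mu_range[OF _ assms] in fastforce)+
  finally show ?thesis by simp
qed

lemma Af_top: "Af f (f+1) = 1"
proof -
  have "{P. good f P \<and> mu f P = f + 1} = {{}}"
  proof (intro equalityI subsetI)
    fix P assume "P \<in> {P. good f P \<and> mu f P = f + 1}"
    then have g: "good f P" and mm: "mu f P = f + 1" by auto
    show "P \<in> {{}}"
    proof (rule ccontr)
      assume "P \<notin> {{}}"
      then have ne: "P \<noteq> {}" by simp
      have "Min P \<in> P" using Min_in[OF good_finite[OF g] ne] .
      then show False using g mm ne unfolding good_def mu_def by auto
    qed
  qed (auto simp: good_def mu_def)
  then show ?thesis unfolding Af_def by simp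
qed

lemma Af_f: "Af f f = 0"
proof -
  have E: "{P. good f P \<and> mu f P = f} = {}"
  proof (intro equalityI subsetI)
    fix P assume "P \<in> {P. good f P \<and> mu f P = f}"
    then have g: "good f P" and mm: "mu f P = f" by auto
    then have ne: "P \<noteq> {}" unfolding mu_def by auto
    have "Min P \<in> P" using Min_in[OF good_finite[OF g] ne] .
    then show "P \<in> {}" using g mm ne unfolding good_def mu_def by auto
  qed auto
  show ?thesis unfolding Af_def E by simp
qed

lemma Af_half:
  assumes "2 * m = f" "f \<ge> 1"
  shows "Af f m = 0"
proof -
  have E: "{P. good f P \<and> mu f P = m} = {}"
  proof (intro equalityI subsetI)
    fix P assume "P \<in> {P. good f P \<and> mu f P = m}"
    then have g: "good f P" and mm: "mu f P = m" by auto
    have "m < f" using assms by simp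
    then have "m \<in> P" using good_mu_props[OF g mm] by simp
    then show "P \<in> {}" using g assms unfolding good_def by force
  qed auto
  show ?thesis unfolding Af_def E by simp
qed

lemma Af_upper:
  assumes "f < 2 * m" "m < f"
  shows "Af f m = 2 ^ (f - m - 1)"
proof -
  have eq: "{P. good f P \<and> mu f P = m} = insert m ` Pow {m<..<f}"
  proof (intro equalityI subsetI)
    fix P assume "P \<in> {P. good f P \<and> mu f P = m}"
    then have g: "good f P" and mm: "mu f P = m" by auto
    note pr = good_mu_props[OF g mm assms(2)]
    have "P = insert m (P - {m})" using pr by auto
    moreover have "P - {m} \<in> Pow {m<..<f}" using pr by force
    ultimately show "P \<in> insert m ` Pow {m<..<f}" by blast
  next
    fix P assume "P \<in> insert m ` Pow {m<..<f}"
    then obtain X where X: "X \<subseteq> {m<..<f}" and P: "P = insert m X" by auto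
    have ge: "\<forall>x\<in>P. m \<le> x" using X P by auto
    have g: "good f P" unfolding good_def
    proof (intro conjI ballI impI)
      show "P \<subseteq> {1..<f}" using X P assms by auto
    next
      fix x y assume "x \<in> P" "y \<in> P"
      then have "m \<le> x" "m \<le> y" using ge by auto
      then have "x + y > f" using assms by linarith
      then show "x + y \<noteq> f" by simp
      { assume "x + y < f" then show "x + y \<in> P" using \<open>x + y > f\<close> by simp }
    qed
    have "P \<noteq> {}" using P by simp
    moreover have "Min P = m" using ge P X by (intro Min_eqI) (auto intro: finite_subset)
    ultimately have "mu f P = m" unfolding mu_def by simp
    then show "P \<in> {P. good f P \<and> mu f P = m}" using g by simp
  qed
  have inj: "inj_on (insert m) (Pow {m<..<f})"
    by (rule inj_onI) (metis Diff_insert_absorb PowD greaterThanLessThan_iff less_irrefl subsetD)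
  have "Af f m = card (Pow {m<..<f})" unfolding Af_def eq using card_image[OF inj] .
  also have "\<dots> = 2 ^ (f - m - 1)" by (simp add: card_Pow)
  finally show ?thesis .
qed

lemma card_between:
  assumes "finite X" "A \<subseteq> X"
  shows "card {R. A \<subseteq> R \<and> R \<subseteq> X} = 2 ^ (card X - card A)"
proof -
  have "{R. A \<subseteq> R \<and> R \<subseteq> X} = (\<lambda>Y. Y \<union> A) ` Pow (X - A)"
  proof (intro equalityI subsetI)
    fix R assume "R \<in> {R. A \<subseteq> R \<and> R \<subseteq> X}"
    then have "R = (R - A) \<union> A" "R - A \<in> Pow (X - A)" by auto
    then show "R \<in> (\<lambda>Y. Y \<union> A) ` Pow (X - A)" by blast
  qed (use assms in auto)
  moreover have "inj_on (\<lambda>Y. Y \<union> A) (Pow (X - A))"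
    by (rule inj_onI) auto
  ultimately have "card {R. A \<subseteq> R \<and> R \<subseteq> X} = card (Pow (X - A))"
    by (simp add: card_image)
  also have "\<dots> = 2 ^ (card X - card A)"
    using assms by (simp add: card_Pow card_Diff_subset finite_subset)
  finally show ?thesis .
qed

lemma FF_sub: "FF f m Q \<subseteq> {f-m<..<f}" unfolding FF_def by auto

lemma fiber_eq:
  assumes P0: "good f P0" "mu f P0 = m" and mf: "2 * m < f"
  defines "Q \<equiv> P0 \<inter> {..<f-m}"
  shows "{P. (good f P \<and> mu f P = m) \<and> P \<inter> {..<f-m} = Q} =
         (\<lambda>R. Q \<union> R) ` {R. FF f m Q \<subseteq> R \<and> R \<subseteq> {f-m<..<f}}"
proof (intro equalityI subsetI)
  have mf': "m < f" using mf by simp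
  note p0 = good_mu_props[OF P0 mf']
  fix P assume "P \<in> {P. (good f P \<and> mu f P = m) \<and> P \<inter> {..<f-m} = Q}"
  then have g: "good f P" and mm: "mu f P = m" and hq: "P \<inter> {..<f-m} = Q" by auto
  note pr = good_mu_props[OF g mm mf']
  have nfm: "f - m \<notin> P"
  proof
    assume "f - m \<in> P"
    then have "m + (f - m) \<noteq> f" using g pr unfolding good_def by blast
    then show False using mf by simp
  qed
  let ?R = "P \<inter> {f-m<..<f}"
  have "P = Q \<union> ?R"
  proof
    show "P \<subseteq> Q \<union> ?R"
    proof
      fix x assume "x \<in> P"
      then show "x \<in> Q \<union> ?R" using hq nfm pr(5) by (cases x "f - m" rule: linorder_cases) auto
    qed
  qed (use hq in auto)
  moreover have "FF f m Q \<subseteq> ?R"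
  proof
    fix z assume "z \<in> FF f m Q"
    then obtain x y where "x \<in> Q" "y \<in> Q" "z = x + y" "f - m < z" "z < f" unfolding FF_def by auto
    then show "z \<in> ?R" using g hq unfolding good_def by auto
  qed
  ultimately show "P \<in> (\<lambda>R. Q \<union> R) ` {R. FF f m Q \<subseteq> R \<and> R \<subseteq> {f-m<..<f}}" by blast
next
  have mf': "m < f" using mf by simp
  note p0 = good_mu_props[OF P0 mf']
  fix P assume "P \<in> (\<lambda>R. Q \<union> R) ` {R. FF f m Q \<subseteq> R \<and> R \<subseteq> {f-m<..<f}}"
  then obtain R where R1: "FF f m Q \<subseteq> R" and R2: "R \<subseteq> {f-m<..<f}" and P: "P = Q \<union> R" by auto
  have Qsub: "Q \<subseteq> P0" unfolding Q_def by auto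
  have Qlt: "\<And>x. x \<in> Q \<Longrightarrow> x < f - m" unfolding Q_def by auto
  have mQ: "m \<in> Q" unfolding Q_def using p0 mf by auto
  have geP: "\<And>x. x \<in> P \<Longrightarrow> m \<le> x" using P R2 Qsub p0(3) mf by force
  have g: "good f P" unfolding good_def
  proof (intro conjI ballI impI)
    show "P \<subseteq> {1..<f}" using P R2 Qsub P0(1) unfolding good_def by auto
  next
    fix x y assume x: "x \<in> P" and y: "y \<in> P"
    show "x + y \<noteq> f"
    proof (cases "x \<in> Q \<and> y \<in> Q")
      case True then show ?thesis using Qsub P0(1) unfolding good_def by blast
    next
      case False
      then have "x > f - m \<or> y > f - m" using x y P R2 by auto
      then show ?thesis using geP[OF x] geP[OF y] mf by auto
    qed
    assume lt: "x + y < f"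
    show "x + y \<in> P"
    proof (cases "x \<in> Q \<and> y \<in> Q")
      case True
      then have inP0: "x + y \<in> P0" using Qsub P0(1) lt unfolding good_def by blast
      show ?thesis
      proof (cases "x + y < f - m")
        case True then show ?thesis using inP0 P Q_def by auto
      next
        case False
        have "x + y \<noteq> f - m"
        proof
          assume "x + y = f - m"
          then have "m + (x + y) = f" using mf by simp
          then show False using inP0 p0(2) P0(1) unfolding good_def by blast
        qed
        then have "x + y \<in> FF f m Q" using True False lt unfolding FF_def by auto
        then show ?thesis using R1 P by auto
      qed
    next
      case False
      then have "x > f - m \<or> y > f - m" using x y P R2 by auto
      then show ?thesis using geP[OF x] geP[OF y] mf lt by auto
    qed
  qed
  have ne: "P \<noteq> {}" using mQ P by auto
  have "Min P = m"
  proof (rule Min_eqI)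
    show "finite P" using good_finite[OF g] .
  qed (use mQ P geP in auto)
  then have "mu f P = m" using ne unfolding mu_def by simp
  moreover have "P \<inter> {..<f-m} = Q" using P R2 Qlt by auto
  ultimately show "P \<in> {P. (good f P \<and> mu f P = m) \<and> P \<inter> {..<f-m} = Q}" using g by simp
qed

lemma Af_formula:
  assumes mf: "2 * m < f" and m1: "m \<ge> 1"
  shows "real (Af f m) = 2 ^ (m - 1) * (\<Sum>Q\<in>Qs f m. (1/2) ^ card (FF f m Q))"
proof -
  let ?G = "{P. good f P \<and> mu f P = m}"
  let ?h = "\<lambda>P. P \<inter> {..<f-m}"
  have "(\<Sum>Q\<in>?h ` ?G. \<Sum>P\<in>{P\<in>?G. ?h P = Q}. 1) = (\<Sum>P\<in>?G. 1::nat)"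
    by (rule sum.group) (auto intro: finite_Gm)
  then have "Af f m = (\<Sum>Q\<in>?h ` ?G. \<Sum>P\<in>{P\<in>?G. ?h P = Q}. 1)"
    unfolding Af_def by simp
  also have "\<dots> = (\<Sum>Q\<in>Qs f m. (2::nat) ^ (m - 1 - card (FF f m Q)))"
    unfolding Qs_def
  proof (rule sum.cong[OF refl])
    fix Q assume "Q \<in> ?h ` ?G"
    then obtain P0 where P0: "good f P0" "mu f P0 = m" and Q: "Q = ?h P0" by auto
    have eq: "{P\<in>?G. ?h P = Q} = (\<lambda>R. Q \<union> R) ` {R. FF f m Q \<subseteq> R \<and> R \<subseteq> {f-m<..<f}}"
      using fiber_eq[OF P0 mf] Q by simp
    have d: "Q \<inter> {f-m<..<f} = {}" using Q by auto
    have inj: "inj_on (\<lambda>R. Q \<union> R) {R. FF f m Q \<subseteq> R \<and> R \<subseteq> {f-m<..<f}}"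
    proof (rule inj_onI)
      fix R1 R2 assume a: "R1 \<in> {R. FF f m Q \<subseteq> R \<and> R \<subseteq> {f-m<..<f}}"
        "R2 \<in> {R. FF f m Q \<subseteq> R \<and> R \<subseteq> {f-m<..<f}}" "Q \<union> R1 = Q \<union> R2"
      have "R1 = (Q \<union> R1) \<inter> {f-m<..<f}" using a(1) d by auto
      moreover have "R2 = (Q \<union> R2) \<inter> {f-m<..<f}" using a(2) d by auto
      ultimately show "R1 = R2" using a(3) by simp
    qed
    have "(\<Sum>P\<in>{P\<in>?G. ?h P = Q}. 1) = card {R. FF f m Q \<subseteq> R \<and> R \<subseteq> {f-m<..<f}}"
      unfolding eq using card_image[OF inj] by simp
    also have "\<dots> = 2 ^ (card {f-m<..<f} - card (FF f m Q))"
      by (rule card_between) (auto simp: FF_sub)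
    also have "card {f-m<..<f} = m - 1" using mf by simp
    finally show "(\<Sum>P\<in>{P\<in>?G. ?h P = Q}. 1) = (2::nat) ^ (m - 1 - card (FF f m Q))" .
  qed
  finally have "real (Af f m) = (\<Sum>Q\<in>Qs f m. real (2 ^ (m - 1 - card (FF f m Q))))" by simp
  also have "\<dots> = (\<Sum>Q\<in>Qs f m. 2 ^ (m - 1) * (1/2) ^ card (FF f m Q))"
  proof (rule sum.cong[OF refl])
    fix Q
    have le: "card (FF f m Q) \<le> m - 1"
      using card_mono[OF _ FF_sub[of f m Q]] mf by simp
    show "real (2 ^ (m - 1 - card (FF f m Q))) = 2 ^ (m - 1) * (1/2) ^ card (FF f m Q)"
    proof -
      have "(2::real) ^ (m - 1 - card (FF f m Q)) = 2 ^ (m - 1) / 2 ^ card (FF f m Q)"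
        by (rule power_diff) (use le in auto)
      then show ?thesis by (simp add: power_one_over)
    qed
  qed
  also have "\<dots> = 2 ^ (m - 1) * (\<Sum>Q\<in>Qs f m. (1/2) ^ card (FF f m Q))"
    by (simp add: sum_distrib_left)
  finally show ?thesis .
qed


definition SS :: "nat set \<Rightarrow> nat set" where
  "SS B = {z. \<exists>x\<in>B. \<exists>y\<in>B. z = x + y}"

definition Bs :: "nat \<Rightarrow> nat set set" where
  "Bs t = {B. 0 \<in> B \<and> B \<subseteq> {..<t} \<and> (\<forall>x\<in>B. \<forall>y\<in>B. x + y \<noteq> t)}"

definition psi :: "nat \<Rightarrow> real" where
  "psi t = (\<Sum>B\<in>Bs t. (1/2) ^ card (SS B \<inter> {..<t}))"

lemma finite_Bs: "finite (Bs t)"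
  by (rule finite_subset[of _ "Pow {..<t}"]) (auto simp: Bs_def)

lemma Bs_0: "Bs 0 = {}" by (auto simp: Bs_def)

lemma psi_0: "psi 0 = 0" by (simp add: psi_def Bs_0)

lemma psi_nonneg: "psi t \<ge> 0" unfolding psi_def by (intro sum_nonneg) simp

lemma Qs_shift:
  assumes mf: "2 * m < f" and f3: "f < 3 * m"
  shows "Qs f m = (\<lambda>B. (+) m ` B) ` Bs (f - 2 * m)"
proof (intro equalityI subsetI)
  have mf': "m < f" using mf by simp
  fix Q assume "Q \<in> Qs f m"
  then obtain P0 where P0: "good f P0" "mu f P0 = m" and Q: "Q = P0 \<inter> {..<f-m}"
    unfolding Qs_def by auto
  note pr = good_mu_props[OF P0 mf']
  let ?B = "(\<lambda>x. x - m) ` Q"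
  have geQ: "\<And>x. x \<in> Q \<Longrightarrow> m \<le> x" using pr Q by auto
  have "Q = (+) m ` ?B"
  proof
    show "Q \<subseteq> (+) m ` ?B"
    proof
      fix x assume "x \<in> Q"
      then have "x = m + (x - m)" "x - m \<in> ?B" using geQ by auto
      then show "x \<in> (+) m ` ?B" by blast
    qed
    show "(+) m ` ?B \<subseteq> Q" using geQ by auto
  qed
  moreover have "?B \<in> Bs (f - 2 * m)"
    unfolding Bs_def
  proof (intro CollectI conjI ballI)
    show "0 \<in> ?B" using pr Q mf by force
    show "?B \<subseteq> {..<f - 2 * m}" using geQ Q by force
  next
    fix x y assume "x \<in> ?B" "y \<in> ?B"
    then obtain x' y' where "x' \<in> Q" "y' \<in> Q" "x = x' - m" "y = y' - m" by auto
    moreover have "x' + y' \<noteq> f" using \<open>x' \<in> Q\<close> \<open>y' \<in> Q\<close> P0(1) Q unfolding good_def by auto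
    moreover have "m \<le> x'" "m \<le> y'" using geQ \<open>x' \<in> Q\<close> \<open>y' \<in> Q\<close> by auto
    ultimately show "x + y \<noteq> f - 2 * m" using mf by auto
  qed
  ultimately show "Q \<in> (\<lambda>B. (+) m ` B) ` Bs (f - 2 * m)" by blast
next
  fix Q assume "Q \<in> (\<lambda>B. (+) m ` B) ` Bs (f - 2 * m)"
  then obtain B where B: "B \<in> Bs (f - 2 * m)" and Q: "Q = (+) m ` B" by auto
  have B0: "0 \<in> B" and Blt: "\<And>x. x \<in> B \<Longrightarrow> x < f - 2 * m"
    and Bs: "\<And>x y. x \<in> B \<Longrightarrow> y \<in> B \<Longrightarrow> x + y \<noteq> f - 2 * m"
    using B unfolding Bs_def by auto
  let ?P = "Q \<union> FF f m Q"
  have geQ: "\<And>x. x \<in> Q \<Longrightarrow> m \<le> x \<and> x < f - m"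
  proof -
    fix x assume "x \<in> Q"
    then obtain b where "b \<in> B" "x = m + b" using Q by auto
    then show "m \<le> x \<and> x < f - m" using Blt[of b] mf by auto
  qed
  have m1: "m \<ge> 1" using mf f3 by simp
  have gP: "\<And>x. x \<in> ?P \<Longrightarrow> m \<le> x" using geQ mf unfolding FF_def by force
  have g: "good f ?P" unfolding good_def
  proof (intro conjI ballI impI)
    show "?P \<subseteq> {1..<f}" using geQ m1 FF_sub[of f m Q] by force
  next
    fix x y assume x: "x \<in> ?P" and y: "y \<in> ?P"
    show "x + y \<noteq> f"
    proof (cases "x \<in> Q \<and> y \<in> Q")
      case True
      then obtain x' y' where "x' \<in> B" "y' \<in> B" "x = m + x'" "y = m + y'" using Q by auto
      then show ?thesis using Bs[of x' y'] mf by auto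
    next
      case False
      then have "x > f - m \<or> y > f - m" using x y geQ unfolding FF_def by auto
      then show ?thesis using gP[OF x] gP[OF y] mf by auto
    qed
    assume lt: "x + y < f"
    show "x + y \<in> ?P"
    proof (cases "x \<in> Q \<and> y \<in> Q")
      case True
      then have "m \<le> x" "m \<le> y" using geQ by auto
      then have "f - m < x + y" using f3 by linarith
      then have "x + y \<in> FF f m Q" using lt True unfolding FF_def by auto
      then show ?thesis by simp
    next
      case False
      then have "x > f - m \<or> y > f - m" using x y geQ unfolding FF_def by auto
      then show ?thesis using gP[OF x] gP[OF y] mf lt by auto
    qed
  qed
  have mQ: "m \<in> Q" using B0 Q by force
  have "Min ?P = m"
    by (rule Min_eqI) (use good_finite[OF g] mQ gP in auto)
  then have "mu f ?P = m" unfolding mu_def using mQ by auto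
  moreover have "?P \<inter> {..<f-m} = Q" using geQ unfolding FF_def by auto
  ultimately show "Q \<in> Qs f m" unfolding Qs_def using g by blast
qed

lemma FF_shift:
  assumes mf: "2 * m < f" and f3: "f < 3 * m"
  shows "FF f m ((+) m ` B) = (+) (2 * m) ` (SS B \<inter> {..<f - 2 * m})"
proof (intro equalityI subsetI)
  fix z assume "z \<in> FF f m ((+) m ` B)"
  then obtain x y where "x \<in> B" "y \<in> B" "z = (m + x) + (m + y)" "f - m < z" "z < f"
    unfolding FF_def by auto
  then have "z = 2 * m + (x + y)" "x + y \<in> SS B \<inter> {..<f - 2 * m}" unfolding SS_def by auto
  then show "z \<in> (+) (2 * m) ` (SS B \<inter> {..<f - 2 * m})" by blast
next
  fix z assume "z \<in> (+) (2 * m) ` (SS B \<inter> {..<f - 2 * m})"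
  then obtain x y where "x \<in> B" "y \<in> B" "z = 2 * m + (x + y)" "x + y < f - 2 * m"
    unfolding SS_def by auto
  then show "z \<in> FF f m ((+) m ` B)" unfolding FF_def using f3 by force
qed

lemma Qsum_psi:
  assumes mf: "2 * m < f" and f3: "f < 3 * m"
  shows "(\<Sum>Q\<in>Qs f m. (1/2) ^ card (FF f m Q)) = psi (f - 2 * m)"
proof -
  have inj: "inj_on (\<lambda>B. (+) m ` B) (Bs (f - 2 * m))"
    by (rule inj_onI) (simp add: inj_image_eq_iff)
  have "(\<Sum>Q\<in>Qs f m. (1/2) ^ card (FF f m Q)) =
        (\<Sum>B\<in>Bs (f - 2 * m). (1/2) ^ card (FF f m ((+) m ` B)))"
    unfolding Qs_shift[OF assms] by (rule sum.reindex[OF inj, unfolded comp_def])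
  also have "\<dots> = psi (f - 2 * m)"
    unfolding psi_def
  proof (rule sum.cong[OF refl])
    fix B
    show "((1::real)/2) ^ card (FF f m ((+) m ` B)) = (1/2) ^ card (SS B \<inter> {..<f - 2 * m})"
      unfolding FF_shift[OF assms] by (subst card_image) auto
  qed
  finally show ?thesis .
qed

lemma Af_middle:
  assumes mf: "2 * m < f" and f3: "f < 3 * m"
  shows "real (Af f m) = 2 ^ (m - 1) * psi (f - 2 * m)"
  using Af_formula[OF mf] Qsum_psi[OF assms] mf f3 by simp


definition wt :: "nat \<Rightarrow> (nat \<Rightarrow> nat) \<Rightarrow> nat set \<Rightarrow> nat set \<Rightarrow> real" where
  "wt a l V C = (\<Prod>p\<in>C. real (l p)) * (1/2) ^ (card C + card {y\<in>C. y + a \<in> V \<and> y + a \<notin> C})"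

definition Tot :: "nat \<Rightarrow> (nat \<Rightarrow> nat) \<Rightarrow> nat set \<Rightarrow> real" where
  "Tot a l V = (\<Sum>C\<in>Pow V. wt a l V C)"

definition Inn :: "nat \<Rightarrow> (nat \<Rightarrow> nat) \<Rightarrow> nat set \<Rightarrow> nat \<Rightarrow> real" where
  "Inn a l V q = (\<Sum>C\<in>{C\<in>Pow V. q \<in> C}. wt a l V C)"

lemma wt_nonneg: "wt a l V C \<ge> 0" unfolding wt_def by (intro mult_nonneg_nonneg prod_nonneg) auto

lemma Tot_empty: "Tot a l {} = 1" unfolding Tot_def wt_def by simp

lemma Inn_le_Tot: "finite V \<Longrightarrow> Inn a l V q \<le> Tot a l V"
  unfolding Inn_def Tot_def by (rule sum_mono2) (auto simp: wt_nonneg)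

lemma Inn_nonneg: "Inn a l V q \<ge> 0" unfolding Inn_def by (intro sum_nonneg wt_nonneg)

lemma ineq1: "n \<ge> 1 \<Longrightarrow> 1 + real n / 3 \<le> (7/5) ^ n"
proof (induct n rule: nat_induct_at_least)
  case base then show ?case by simp
next
  case (Suc n)
  have "1 + real (Suc n) / 3 \<le> (7/5) * (1 + real n / 3)" by simp
  also have "\<dots> \<le> (7/5) * (7/5) ^ n" using Suc by (intro mult_left_mono) auto
  finally show ?case by simp
qed

lemma ineq2: "n \<ge> 1 \<Longrightarrow> 1/2 + real n / 3 \<le> (2/3) * (7/5) ^ n"
proof (induct n rule: nat_induct_at_least)
  case base then show ?case by simp
next
  case (Suc n)
  have aux: "1/2 + (1 + x) / 3 \<le> (7/5) * (1/2 + x / 3)" if "x \<ge> 1" for x :: real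
    using that by (simp add: field_simps)
  have "real n \<ge> 1" using Suc by simp
  then have "1/2 + real (Suc n) / 3 \<le> (7/5) * (1/2 + real n / 3)" unfolding of_nat_Suc by (rule aux)
  also have "\<dots> \<le> (7/5) * ((2/3) * (7/5) ^ n)" using Suc by (intro mult_left_mono) auto
  finally show ?case by simp
qed

lemma ineq3: "n \<ge> 1 \<Longrightarrow> 1 + real n / 2 \<le> (7/5) ^ (n + 1)"
proof (induct n rule: nat_induct_at_least)
  case base then show ?case by simp
next
  case (Suc n)
  have aux: "1 + (1 + x) / 2 \<le> (7/5) * (1 + x / 2)" if "x \<ge> 1" for x :: real
    using that by (simp add: field_simps)
  have "real n \<ge> 1" using Suc by simp
  then have "1 + real (Suc n) / 2 \<le> (7/5) * (1 + real n / 2)" unfolding of_nat_Suc by (rule aux)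
  also have "\<dots> \<le> (7/5) * (7/5) ^ (n + 1)" using Suc by (intro mult_left_mono) auto
  finally show ?case by simp
qed

lemma ineq4a: "n \<ge> 2 \<Longrightarrow> 1/2 + real n / 2 \<le> (2/3) * (7/5) ^ (n + 1)"
proof (induct n rule: nat_induct_at_least)
  case base then show ?case by (simp add: eval_nat_numeral)
next
  case (Suc n)
  have aux: "1/2 + (1 + x) / 2 \<le> (7/5) * (1/2 + x / 2)" if "x \<ge> 2" for x :: real
    using that by (simp add: field_simps)
  have "real n \<ge> 2" using Suc by simp
  then have "1/2 + real (Suc n) / 2 \<le> (7/5) * (1/2 + real n / 2)" unfolding of_nat_Suc by (rule aux)
  also have "\<dots> \<le> (7/5) * ((2/3) * (7/5) ^ (n + 1))" using Suc by (intro mult_left_mono) auto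
  finally show ?case by simp
qed

lemma ineq4: "n \<ge> 1 \<Longrightarrow> 1/2 + real n / 2 \<le> (2/3) * (7/5) ^ (n + 1)"
  using ineq4a[of n] by (cases "n = 1") auto

lemma Tot_split:
  assumes fA: "finite A" and fB: "finite B" and d: "A \<inter> B = {}"
    and cA: "\<And>y. y \<in> A \<Longrightarrow> y + a \<in> A \<union> B \<Longrightarrow> y + a \<in> A"
    and cB: "\<And>y. y \<in> B \<Longrightarrow> y + a \<in> A \<union> B \<Longrightarrow> y + a \<in> B"
  shows "Tot a l (A \<union> B) = Tot a l A * Tot a l B"
proof -
  have img: "Pow (A \<union> B) = (\<lambda>(X, Y). X \<union> Y) ` (Pow A \<times> Pow B)"
  proof (intro equalityI subsetI)
    fix C assume "C \<in> Pow (A \<union> B)"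
    then have "C = (C \<inter> A) \<union> (C \<inter> B)" "(C \<inter> A, C \<inter> B) \<in> Pow A \<times> Pow B" by auto
    then show "C \<in> (\<lambda>(X, Y). X \<union> Y) ` (Pow A \<times> Pow B)" by (metis (no_types, lifting) case_prod_conv image_eqI)
  qed auto
  have inj: "inj_on (\<lambda>(X, Y). X \<union> Y) (Pow A \<times> Pow B)"
  proof (rule inj_onI, clarify)
    fix X Y X' Y' assume "X \<subseteq> A" "Y \<subseteq> B" "X' \<subseteq> A" "Y' \<subseteq> B" "X \<union> Y = X' \<union> Y'"
    then show "X = X' \<and> Y = Y'" using d by blast
  qed
  have wsplit: "wt a l (A \<union> B) (X \<union> Y) = wt a l A X * wt a l B Y" if X: "X \<subseteq> A" and Y: "Y \<subseteq> B" for X Y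
  proof -
    have fX: "finite X" and fY: "finite Y" using X Y fA fB finite_subset by auto
    have dXY: "X \<inter> Y = {}" using X Y d by auto
    have p: "(\<Prod>p\<in>X \<union> Y. real (l p)) = (\<Prod>p\<in>X. real (l p)) * (\<Prod>p\<in>Y. real (l p))"
      by (rule prod.union_disjoint[OF fX fY dXY])
    have c1: "card (X \<union> Y) = card X + card Y" using card_Un_disjoint[OF fX fY dXY] .
    have E: "{y\<in>X \<union> Y. y + a \<in> A \<union> B \<and> y + a \<notin> X \<union> Y} =
             {y\<in>X. y + a \<in> A \<and> y + a \<notin> X} \<union> {y\<in>Y. y + a \<in> B \<and> y + a \<notin> Y}"
    proof (intro equalityI subsetI)
      fix y assume y: "y \<in> {y\<in>X \<union> Y. y + a \<in> A \<union> B \<and> y + a \<notin> X \<union> Y}"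
      show "y \<in> {y\<in>X. y + a \<in> A \<and> y + a \<notin> X} \<union> {y\<in>Y. y + a \<in> B \<and> y + a \<notin> Y}"
      proof (cases "y \<in> X")
        case True then show ?thesis using y cA[of y] X by auto
      next
        case False then show ?thesis using y cB[of y] Y by auto
      qed
    next
      fix y assume y: "y \<in> {y\<in>X. y + a \<in> A \<and> y + a \<notin> X} \<union> {y\<in>Y. y + a \<in> B \<and> y + a \<notin> Y}"
      then show "y \<in> {y\<in>X \<union> Y. y + a \<in> A \<union> B \<and> y + a \<notin> X \<union> Y}" using X Y d by auto
    qed
    have c2: "card {y\<in>X \<union> Y. y + a \<in> A \<union> B \<and> y + a \<notin> X \<union> Y} =
              card {y\<in>X. y + a \<in> A \<and> y + a \<notin> X} + card {y\<in>Y. y + a \<in> B \<and> y + a \<notin> Y}"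
      unfolding E by (rule card_Un_disjoint) (use fX fY dXY in auto)
    show ?thesis unfolding wt_def p c1 c2 by (simp add: power_add algebra_simps)
  qed
  have "Tot a l (A \<union> B) = (\<Sum>Z\<in>Pow A \<times> Pow B. wt a l (A \<union> B) ((\<lambda>(X, Y). X \<union> Y) Z))"
    unfolding Tot_def img by (rule sum.reindex[OF inj, unfolded comp_def])
  also have "\<dots> = (\<Sum>Z\<in>Pow A \<times> Pow B. wt a l A (fst Z) * wt a l B (snd Z))"
    by (rule sum.cong[OF refl]) (auto simp: wsplit)
  also have "\<dots> = (\<Sum>X\<in>Pow A. \<Sum>Y\<in>Pow B. wt a l A X * wt a l B Y)"
    by (subst sum.cartesian_product) (simp add: case_prod_beta)
  also have "\<dots> = Tot a l A * Tot a l B"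
    unfolding Tot_def by (simp add: sum_product)
  finally show ?thesis .
qed

lemma Tot_step:
  assumes fV: "finite V" and eV: "e \<notin> V" and lt: "\<And>y. y \<in> V \<Longrightarrow> y < e"
    and mx: "V \<noteq> {} \<Longrightarrow> Max V + a = e" and a1: "a \<ge> 1"
  shows "Tot a l (insert e V) = Tot a l V - Inn a l V (Max V) / 2 + (real (l e) / 2) * Tot a l V"
    and "Inn a l (insert e V) e = (real (l e) / 2) * Tot a l V"
proof -
  let ?V' = "insert e V"
  have w1: "wt a l ?V' C = wt a l V C * (if Max V \<in> C then 1/2 else 1)" if C: "C \<subseteq> V" for C
  proof -
    have fC: "finite C" using C fV finite_subset by auto
    have eC: "e \<notin> C" using C eV by auto
    show ?thesis
    proof (cases "Max V \<in> C")
      case True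
      then have Vne: "V \<noteq> {}" using C by auto
      have E: "{y\<in>C. y + a \<in> ?V' \<and> y + a \<notin> C} = insert (Max V) {y\<in>C. y + a \<in> V \<and> y + a \<notin> C}"
        using mx[OF Vne] eC True by auto
      have nin: "Max V \<notin> {y\<in>C. y + a \<in> V \<and> y + a \<notin> C}" using mx[OF Vne] eV by auto
      have "card {y\<in>C. y + a \<in> ?V' \<and> y + a \<notin> C} = Suc (card {y\<in>C. y + a \<in> V \<and> y + a \<notin> C})"
        unfolding E using nin fC by (simp add: card_insert_if)
      then show ?thesis using True unfolding wt_def by simp
    next
      case False
      have E: "{y\<in>C. y + a \<in> ?V' \<and> y + a \<notin> C} = {y\<in>C. y + a \<in> V \<and> y + a \<notin> C}"
      proof (intro equalityI subsetI)
        fix y assume y: "y \<in> {y\<in>C. y + a \<in> ?V' \<and> y + a \<notin> C}"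
        have "y + a \<noteq> e"
        proof
          assume "y + a = e"
          have Vne: "V \<noteq> {}" using y C by auto
          have "y = Max V" using \<open>y + a = e\<close> mx[OF Vne] by simp
          then show False using False y by auto
        qed
        then show "y \<in> {y\<in>C. y + a \<in> V \<and> y + a \<notin> C}" using y by auto
      qed auto
      then show ?thesis using False unfolding wt_def by simp
    qed
  qed
  have w2: "wt a l ?V' (insert e C) = (real (l e) / 2) * wt a l V C" if C: "C \<subseteq> V" for C
  proof -
    have fC: "finite C" using C fV finite_subset by auto
    have eC: "e \<notin> C" using C eV by auto
    have E: "{y\<in>insert e C. y + a \<in> ?V' \<and> y + a \<notin> insert e C} = {y\<in>C. y + a \<in> V \<and> y + a \<notin> C}"
    proof (intro equalityI subsetI)
      fix y assume y: "y \<in> {y\<in>insert e C. y + a \<in> ?V' \<and> y + a \<notin> insert e C}"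
      have "y \<noteq> e"
      proof
        assume "y = e"
        then have "e + a \<in> V" using y a1 by auto
        then show False using lt[of "e + a"] by simp
      qed
      then show "y \<in> {y\<in>C. y + a \<in> V \<and> y + a \<notin> C}" using y by auto
    next
      fix y assume y: "y \<in> {y\<in>C. y + a \<in> V \<and> y + a \<notin> C}"
      then show "y \<in> {y\<in>insert e C. y + a \<in> ?V' \<and> y + a \<notin> insert e C}" using eV by auto
    qed
    show ?thesis unfolding wt_def E using fC eC by (simp add: card_insert_if)
  qed
  have PV: "Pow ?V' = Pow V \<union> insert e ` Pow V" by (rule Pow_insert)
  have dis: "Pow V \<inter> insert e ` Pow V = {}" using eV by auto
  have injI: "inj_on (insert e) (Pow V)"
    by (rule inj_onI) (use eV in \<open>metis Diff_insert_absorb PowD subsetD\<close>)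
  have s2: "(\<Sum>C\<in>insert e ` Pow V. wt a l ?V' C) = (real (l e) / 2) * Tot a l V"
    unfolding Tot_def sum.reindex[OF injI] comp_def sum_distrib_left
    by (rule sum.cong[OF refl]) (simp add: w2)
  have s1: "(\<Sum>C\<in>Pow V. wt a l ?V' C) = Tot a l V - Inn a l V (Max V) / 2"
  proof -
    have "(\<Sum>C\<in>Pow V. wt a l ?V' C) = (\<Sum>C\<in>Pow V. wt a l V C - (if Max V \<in> C then wt a l V C / 2 else 0))"
      by (rule sum.cong[OF refl]) (simp add: w1)
    also have "\<dots> = Tot a l V - (\<Sum>C\<in>Pow V. (if Max V \<in> C then wt a l V C / 2 else 0))"
      unfolding Tot_def by (simp add: sum_subtractf)
    also have "(\<Sum>C\<in>Pow V. (if Max V \<in> C then wt a l V C / 2 else 0)) = Inn a l V (Max V) / 2"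
      unfolding Inn_def using fV by (simp add: sum.inter_filter[symmetric] sum_divide_distrib)
    finally show ?thesis .
  qed
  show "Tot a l (insert e V) = Tot a l V - Inn a l V (Max V) / 2 + (real (l e) / 2) * Tot a l V"
    unfolding Tot_def PV
    by (subst sum.union_disjoint) (use fV dis s1 s2 in \<open>auto simp: Tot_def\<close>)
  have "{C\<in>Pow ?V'. e \<in> C} = insert e ` Pow V" using eV by (auto simp: Pow_insert)
  then show "Inn a l (insert e V) e = (real (l e) / 2) * Tot a l V"
    unfolding Inn_def using s2 by simp
qed


definition Kc :: "nat \<Rightarrow> nat \<Rightarrow> nat \<Rightarrow> nat \<Rightarrow> nat set" where
  "Kc s a j e = {p\<in>{s..<e}. p mod a = j}"

lemma Tot_nonneg: "Tot a l V \<ge> 0" unfolding Tot_def by (intro sum_nonneg wt_nonneg)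

lemma inv_step:
  fixes T I S :: real and L :: nat
  assumes L1: "L \<ge> 1" and I0: "0 \<le> I" and IT: "I \<le> T"
    and h1: "T - I / 3 \<le> (7/5) ^ n"
  shows "(T - I / 2 + (real L / 2) * T) - ((real L / 2) * T) / 3 \<le> (7/5) ^ (L + n)"
    and "T - I / 2 + (real L / 2) * T \<le> (7/5) ^ (L + n + 1)"
proof -
  let ?g = "(7/5::real)"
  have TI: "T - I \<ge> 0" using IT by simp
  have A: "(1 + real L / 3) * (T - I) \<le> ?g ^ L * (T - I)"
    by (rule mult_right_mono[OF ineq1[OF L1] TI])
  have B: "(1/2 + real L / 3) * I \<le> ((2/3) * ?g ^ L) * I"
    by (rule mult_right_mono[OF ineq2[OF L1] I0])
  have C: "?g ^ L * (T - I / 3) \<le> ?g ^ L * ?g ^ n"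
    by (rule mult_left_mono[OF h1]) simp
  have e1: "(T - I / 2 + (real L / 2) * T) - ((real L / 2) * T) / 3 = (1 + real L / 3) * (T - I) + (1/2 + real L / 3) * I"
    by (simp add: field_simps)
  have alg: "G * (T - I) + ((2/3) * G) * I = G * (T - I / 3)" for G :: real
    by (simp add: field_simps)
  have e2: "?g ^ L * (T - I) + ((2/3) * ?g ^ L) * I = ?g ^ L * (T - I / 3)"
    by (rule alg)
  have e3: "?g ^ L * ?g ^ n = ?g ^ (L + n)" by (simp add: power_add)
  show "(T - I / 2 + (real L / 2) * T) - ((real L / 2) * T) / 3 \<le> ?g ^ (L + n)"
    using A B C e1 e2 e3 by linarith
  have A': "(1 + real L / 2) * (T - I) \<le> ?g ^ (L + 1) * (T - I)"
    by (rule mult_right_mono[OF ineq3[OF L1] TI])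
  have B': "(1/2 + real L / 2) * I \<le> ((2/3) * ?g ^ (L + 1)) * I"
    by (rule mult_right_mono[OF ineq4[OF L1] I0])
  have C': "?g ^ (L + 1) * (T - I / 3) \<le> ?g ^ (L + 1) * ?g ^ n"
    by (rule mult_left_mono[OF h1]) simp
  have e1': "T - I / 2 + (real L / 2) * T = (1 + real L / 2) * (T - I) + (1/2 + real L / 2) * I"
    by (simp add: field_simps)
  have e2': "?g ^ (L + 1) * (T - I) + ((2/3) * ?g ^ (L + 1)) * I = ?g ^ (L + 1) * (T - I / 3)"
    by (rule alg)
  have e3': "?g ^ (L + 1) * ?g ^ n = ?g ^ (L + n + 1)" by (simp add: power_add)
  show "T - I / 2 + (real L / 2) * T \<le> ?g ^ (L + n + 1)"
    using A' B' C' e1' e2' e3' by linarith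
qed

lemma chain_inv:
  assumes a1: "a \<ge> 1" and l1: "\<And>p. l p \<ge> 1"
  shows "Tot a l (Kc s a j e) - Inn a l (Kc s a j e) (Max (Kc s a j e)) / 3 \<le> (7/5) ^ (\<Sum>p\<in>Kc s a j e. l p)
       \<and> Tot a l (Kc s a j e) \<le> (7/5) ^ ((\<Sum>p\<in>Kc s a j e. l p) + 1)"
proof (induct e)
  case 0
  have "Kc s a j 0 = {}" unfolding Kc_def by auto
  then show ?case by (simp add: Tot_empty Inn_def sum_nonneg wt_nonneg)
next
  case (Suc e)
  let ?V = "Kc s a j e"
  have fV: "finite ?V" unfolding Kc_def by auto
  show ?case
  proof (cases "s \<le> e \<and> e mod a = j")
    case False
    then have "Kc s a j (Suc e) = ?V" unfolding Kc_def using less_Suc_eq by auto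
    then show ?thesis using Suc by simp
  next
    case True
    have eq: "Kc s a j (Suc e) = insert e ?V" using True unfolding Kc_def by auto
    have eV: "e \<notin> ?V" unfolding Kc_def by auto
    have lt: "\<And>y. y \<in> ?V \<Longrightarrow> y < e" unfolding Kc_def by auto
    have mx: "Max ?V + a = e" if ne: "?V \<noteq> {}"
    proof -
      have Mi: "Max ?V \<in> ?V" using Max_in[OF fV ne] .
      have m1: "Max ?V mod a = e mod a" "Max ?V < e" "s \<le> Max ?V" using Mi True unfolding Kc_def by auto
      have le: "Max ?V + a \<le> e"
      proof (rule ccontr)
        assume "\<not> Max ?V + a \<le> e"
        then have "e - Max ?V < a" "Max ?V < e" using m1 by auto
        moreover have "a dvd (e - Max ?V)" using m1 mod_eq_dvd_iff_nat[of "Max ?V" e a] by simp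
        ultimately show False using m1(2) by (metis dvd_imp_le zero_less_diff not_less)
      qed
      have ea: "a \<le> e" using le by simp
      have md: "(e - a) mod a = e mod a" using ea by (metis le_add_diff_inverse2 mod_add_self2)
      have inV: "e - a \<in> ?V" unfolding Kc_def using le m1 True a1 md by auto
      have "e - a \<le> Max ?V" using Max_ge[OF fV inV] .
      then show ?thesis using le by linarith
    qed
    have st1: "Tot a l (insert e ?V) = Tot a l ?V - Inn a l ?V (Max ?V) / 2 + (real (l e) / 2) * Tot a l ?V"
      by (rule Tot_step(1)[OF fV eV lt mx a1])
    have st2: "Inn a l (insert e ?V) e = (real (l e) / 2) * Tot a l ?V"
      by (rule Tot_step(2)[OF fV eV lt mx a1])
    have fV': "finite (insert e ?V)" using fV by simp
    have Mx': "Max (insert e ?V) = e"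
      using lt fV by (intro Max_eqI) (auto simp: less_imp_le)
    have sum': "(\<Sum>p\<in>insert e ?V. l p) = l e + (\<Sum>p\<in>?V. l p)" using fV eV by simp
    have h1: "Tot a l ?V - Inn a l ?V (Max ?V) / 3 \<le> (7/5) ^ (\<Sum>p\<in>?V. l p)" using Suc by simp
    note ivs = inv_step[OF l1[of e] Inn_nonneg Inn_le_Tot[OF fV] h1]
    show ?thesis unfolding eq Mx' sum' st1 st2
      using ivs by simp
  qed
qed

lemma CT:
  assumes a1: "a \<ge> 1" and l1: "\<And>p. l p \<ge> 1"
  shows "Tot a l {s..<e} \<le> (7/5) ^ ((\<Sum>p\<in>{s..<e}. l p) + a)"
proof -
  define U where "U J = {p\<in>{s..<e}. p mod a < J}" for J
  have main: "Tot a l (U J) \<le> (7/5) ^ ((\<Sum>p\<in>U J. l p) + J)" for J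
  proof (induct J)
    case 0
    have "U 0 = {}" unfolding U_def by auto
    then show ?case by (simp add: Tot_empty)
  next
    case (Suc J)
    have eq: "U (Suc J) = U J \<union> Kc s a J e" unfolding U_def Kc_def by auto
    have d: "U J \<inter> Kc s a J e = {}" unfolding U_def Kc_def by auto
    have fU: "finite (U J)" and fK: "finite (Kc s a J e)" unfolding U_def Kc_def by auto
    have split: "Tot a l (U (Suc J)) = Tot a l (U J) * Tot a l (Kc s a J e)"
      unfolding eq
      by (rule Tot_split[OF fU fK d]) (auto simp: U_def Kc_def)
    have sumeq: "(\<Sum>p\<in>U (Suc J). l p) = (\<Sum>p\<in>U J. l p) + (\<Sum>p\<in>Kc s a J e. l p)"
      unfolding eq by (rule sum.union_disjoint[OF fU fK d])
    have cK: "Tot a l (Kc s a J e) \<le> (7/5) ^ ((\<Sum>p\<in>Kc s a J e. l p) + 1)"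
      using chain_inv[OF a1 l1, where s=s and j=J and e=e] by simp
    have "Tot a l (U (Suc J)) \<le> (7/5) ^ ((\<Sum>p\<in>U J. l p) + J) * (7/5) ^ ((\<Sum>p\<in>Kc s a J e. l p) + 1)"
      unfolding split by (rule mult_mono[OF Suc cK]) (auto simp: Tot_nonneg)
    also have "\<dots> = (7/5) ^ ((\<Sum>p\<in>U (Suc J). l p) + Suc J)"
      unfolding sumeq by (simp add: power_add[symmetric] algebra_simps)
    finally show ?case .
  qed
  have "U a = {s..<e}" unfolding U_def using a1 by auto
  then show ?thesis using main[of a] by simp
qed


lemma Qs_props:
  assumes Q: "Q \<in> Qs f m" and mf: "2 * m < f"
  shows "m \<in> Q" "Q \<subseteq> {m..<f-m}" "m \<ge> 1"
    "\<And>x y. x \<in> Q \<Longrightarrow> y \<in> Q \<Longrightarrow> x + y < f - m \<Longrightarrow> x + y \<in> Q"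
    "\<And>x. x \<in> Q \<Longrightarrow> x + m \<noteq> f - m"
    "\<And>x y. x \<in> Q \<Longrightarrow> y \<in> Q \<Longrightarrow> x + y \<noteq> f"
proof -
  obtain P0 where P0: "good f P0" "mu f P0 = m" and QP: "Q = P0 \<inter> {..<f-m}"
    using Q unfolding Qs_def by auto
  have mf': "m < f" using mf by simp
  note pr = good_mu_props[OF P0 mf']
  show "m \<in> Q" using pr QP mf by auto
  show "Q \<subseteq> {m..<f-m}" using pr QP by auto
  show "m \<ge> 1" using pr by simp
  show "\<And>x y. x \<in> Q \<Longrightarrow> y \<in> Q \<Longrightarrow> x + y < f - m \<Longrightarrow> x + y \<in> Q"
    using P0(1) QP unfolding good_def by auto
  show "\<And>x y. x \<in> Q \<Longrightarrow> y \<in> Q \<Longrightarrow> x + y \<noteq> f"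
    using P0(1) QP unfolding good_def by auto
  show "\<And>x. x \<in> Q \<Longrightarrow> x + m \<noteq> f - m"
  proof
    fix x assume x: "x \<in> Q" and e: "x + m = f - m"
    have xP: "x \<in> P0" using x QP by auto
    have "x + m < f" using e mf pr(4) by simp
    then have "x + m \<in> P0" using P0(1) xP pr(2) unfolding good_def by blast
    moreover have "m + (x + m) = f" using e mf by simp
    ultimately show False using P0(1) pr(2) unfolding good_def by blast
  qed
qed

lemma Qs_iter:
  assumes Q: "Q \<in> Qs f m" and mf: "2 * m < f" and y: "y \<in> Q"
  shows "y + k * m < f - m \<Longrightarrow> y + k * m \<in> Q"
proof (induct k)
  case 0 then show ?case using y by simp
next
  case (Suc k)
  have "y + k * m \<in> Q" using Suc by simp
  moreover have "(y + k * m) + m < f - m" using Suc.prems by simp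
  ultimately have "(y + k * m) + m \<in> Q" using Qs_props(4)[OF Q mf] Qs_props(1)[OF Q mf] by blast
  then show ?case by (simp add: algebra_simps)
qed

lemma mod_eq_far:
  fixes x y m :: nat
  assumes "x mod m = y mod m" "x < y"
  shows "x + m \<le> y"
proof -
  have "m dvd (y - x)" using assms mod_eq_dvd_iff_nat[of x y m] by simp
  then obtain k where k: "y - x = m * k" by auto
  have "k \<noteq> 0"
  proof
    assume "k = 0"
    with k have "y - x = 0" by simp
    with assms(2) show False by simp
  qed
  then have "m \<le> m * k" by simp
  then show ?thesis using k assms(2) by linarith
qed

definition Lset :: "nat \<Rightarrow> nat \<Rightarrow> nat \<Rightarrow> nat set" where
  "Lset m m2 p = {x. m2 \<le> x \<and> x \<le> p \<and> x mod m = p mod m}"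

definition Wset :: "nat \<Rightarrow> nat \<Rightarrow> nat \<Rightarrow> nat set" where
  "Wset f m m2 = {max (f - 2 * m + 1) m2..<f - m}"

definition Eset :: "nat \<Rightarrow> nat set \<Rightarrow> nat set \<Rightarrow> nat set" where
  "Eset a W C = {y\<in>C. y + a \<in> W \<and> y + a \<notin> C}"

definition Rec :: "nat \<Rightarrow> nat \<Rightarrow> nat set \<Rightarrow> (nat \<Rightarrow> nat) \<Rightarrow> nat set" where
  "Rec f m C g = {x\<in>{m..<f-m}. m dvd x} \<union> {x. \<exists>p\<in>C. x mod m = p mod m \<and> g p \<le> x \<and> x \<le> p}"

context
  fixes f m a :: nat
  assumes mf: "2 * m < f" and a1: "a \<ge> 1"
begin

definition Qa :: "nat set set" where
  "Qa = {Q\<in>Qs f m. Q \<noteq> {m} \<and> Min (Q - {m}) = m + a}"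

definition gmin :: "nat set \<Rightarrow> nat \<Rightarrow> nat" where
  "gmin Q p = Min {x\<in>Q. m + a \<le> x \<and> x mod m = p mod m}"

lemma Qa_props:
  assumes Q: "Q \<in> Qa"
  shows "m + a \<in> Q" "\<And>x. x \<in> Q \<Longrightarrow> x \<noteq> m \<Longrightarrow> m + a \<le> x" "finite Q"
proof -
  have QQ: "Q \<in> Qs f m" and ne: "Q \<noteq> {m}" and mn: "Min (Q - {m}) = m + a" using Q unfolding Qa_def by auto
  have fQ: "finite Q" using Qs_props(2)[OF QQ mf] finite_subset by blast
  have ne': "Q - {m} \<noteq> {}" using ne Qs_props(1)[OF QQ mf] by auto
  show "m + a \<in> Q" using Min_in[of "Q - {m}"] fQ ne' mn by auto
  show "\<And>x. x \<in> Q \<Longrightarrow> x \<noteq> m \<Longrightarrow> m + a \<le> x" using Min_le[of "Q - {m}"] fQ mn by auto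
  show "finite Q" by (rule fQ)
qed

lemma W_props:
  assumes "p \<in> Wset f m (m + a)"
  shows "f - 2 * m < p" "p < f - m" "m + a \<le> p"
  using assms unfolding Wset_def by auto

lemma weight_bound:
  assumes Q: "Q \<in> Qa"
  defines "W \<equiv> Wset f m (m + a)"
  shows "((1::real)/2) ^ card (FF f m Q) \<le> (1/2) ^ (card (Q \<inter> W) + card (Eset a W (Q \<inter> W)))"
proof -
  have QQ: "Q \<in> Qs f m" using Q unfolding Qa_def by auto
  note qp = Qs_props[OF QQ mf]
  note qa = Qa_props[OF Q]
  let ?C = "Q \<inter> W" and ?E = "Eset a W (Q \<inter> W)"
  have s1: "(+) m ` ?C \<subseteq> FF f m Q"
  proof
    fix z assume "z \<in> (+) m ` ?C"
    then obtain y where y: "y \<in> Q" "y \<in> W" "z = m + y" by auto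
    have "f - 2 * m < y" "y < f - m" using W_props y(2) unfolding W_def by auto
    then show "z \<in> FF f m Q" unfolding FF_def using y qp(1) mf by force
  qed
  have s2: "(+) (m + a) ` ?E \<subseteq> FF f m Q"
  proof
    fix z assume "z \<in> (+) (m + a) ` ?E"
    then obtain y where y: "y \<in> Q" "y + a \<in> W" "z = m + a + y" unfolding Eset_def by auto
    have "f - 2 * m < y + a" "y + a < f - m" using W_props y(2) unfolding W_def by auto
    then show "z \<in> FF f m Q" unfolding FF_def using y qa(1) mf by force
  qed
  have dj: "(+) m ` ?C \<inter> (+) (m + a) ` ?E = {}"
  proof -
    have False if z1: "z \<in> (+) m ` ?C" and z2: "z \<in> (+) (m + a) ` ?E" for z
    proof -
      obtain y' where y': "y' \<in> ?C" "z = m + y'" using z1 by auto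
      obtain y where y: "y \<in> ?E" "z = m + a + y" using z2 by auto
      have "y' = y + a" using y'(2) y(2) by simp
      then show False using y(1) y'(1) unfolding Eset_def by auto
    qed
    then show ?thesis by blast
  qed
  have fFF: "finite (FF f m Q)" unfolding FF_def by auto
  have fC: "finite ?C" using qa(3) by simp
  have fE: "finite ?E" by (rule finite_subset[OF _ fC]) (auto simp: Eset_def)
  have "card ?C + card ?E = card ((+) m ` ?C) + card ((+) (m + a) ` ?E)"
    by (simp add: card_image)
  also have "\<dots> = card ((+) m ` ?C \<union> (+) (m + a) ` ?E)"
    by (rule card_Un_disjoint[symmetric]) (use fC fE dj in auto)
  also have "\<dots> \<le> card (FF f m Q)" by (rule card_mono[OF fFF]) (use s1 s2 in auto)
  finally have le: "card ?C + card ?E \<le> card (FF f m Q)" .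
  show ?thesis by (rule power_decreasing[OF le]) auto
qed

lemma gmin_props:
  assumes Q: "Q \<in> Qa" and p: "p \<in> Q" "m + a \<le> p"
  shows "gmin Q p \<in> Q" "gmin Q p \<in> Lset m (m + a) p"
proof -
  let ?S = "{x\<in>Q. m + a \<le> x \<and> x mod m = p mod m}"
  have fS: "finite ?S" using Qa_props(3)[OF Q] by simp
  have pS: "p \<in> ?S" using p by simp
  have "gmin Q p \<in> ?S" unfolding gmin_def using Min_in[OF fS] pS by blast
  moreover have "gmin Q p \<le> p" unfolding gmin_def using Min_le[OF fS pS] .
  ultimately show "gmin Q p \<in> Q" "gmin Q p \<in> Lset m (m + a) p" unfolding Lset_def by auto
qed

lemma Q_rec:
  assumes Q: "Q \<in> Qa"
  defines "W \<equiv> Wset f m (m + a)"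
  shows "Q = Rec f m (Q \<inter> W) (gmin Q)"
proof
  have QQ: "Q \<in> Qs f m" using Q unfolding Qa_def by auto
  note qp = Qs_props[OF QQ mf]
  note qa = Qa_props[OF Q]
  show "Q \<subseteq> Rec f m (Q \<inter> W) (gmin Q)"
  proof
    fix x assume x: "x \<in> Q"
    have xr: "m \<le> x" "x < f - m" using qp(2) x by auto
    show "x \<in> Rec f m (Q \<inter> W) (gmin Q)"
    proof (cases "m dvd x")
      case True then show ?thesis unfolding Rec_def using xr by auto
    next
      case False
      then have "x \<noteq> m" by auto
      then have xa: "m + a \<le> x" using qa(2) x by simp
      define k where "k = (f - m - 1 - x) div m"
      define p where "p = x + k * m"
      have m0: "m > 0" using qp(3) by simp
      have "k * m \<le> f - m - 1 - x" unfolding k_def by (simp add: div_times_less_eq_dividend)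
      then have plt: "p < f - m" unfolding p_def using xr by linarith
      have "f - m - 1 - x < (k + 1) * m" unfolding k_def using m0
        by (metis add.commute dividend_less_times_div mult.commute mult_Suc_right plus_1_eq_Suc)
      then have pge: "f - 2 * m \<le> p" unfolding p_def using xr mf by (simp add: algebra_simps)
      have pQ: "p \<in> Q" unfolding p_def by (rule Qs_iter[OF QQ mf x]) (use plt p_def in simp)
      have "p + m \<noteq> f - m" using qp(5)[OF pQ] .
      then have "p \<noteq> f - 2 * m" using mf by auto
      then have pW: "p \<in> W" unfolding W_def Wset_def using pge plt xa p_def by auto
      have pm: "x mod m = p mod m" unfolding p_def by simp
      have "gmin Q p \<le> x" unfolding gmin_def using qa(3) x xa pm by (intro Min_le) auto
      moreover have "x \<le> p" unfolding p_def by simp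
      ultimately show ?thesis unfolding Rec_def using pW pQ pm by blast
    qed
  qed
  show "Rec f m (Q \<inter> W) (gmin Q) \<subseteq> Q"
  proof
    fix x assume x: "x \<in> Rec f m (Q \<inter> W) (gmin Q)"
    show "x \<in> Q"
    proof (cases "x \<in> {m..<f-m} \<and> m dvd x")
      case True
      then obtain k where k: "x = m * k" by auto
      have "k \<ge> 1" using True k qp(3) by (cases k) auto
      then have "x = m + (k - 1) * m" using k by (cases k) (auto simp: algebra_simps)
      then show ?thesis using Qs_iter[OF QQ mf qp(1), of "k - 1"] True by auto
    next
      case False
      then obtain p where p: "p \<in> Q" "p \<in> W" "x mod m = p mod m" "gmin Q p \<le> x" "x \<le> p"
        using x unfolding Rec_def by auto
      have pa: "m + a \<le> p" using W_props p(2) unfolding W_def by auto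
      note gp = gmin_props[OF Q p(1) pa]
      have gm: "gmin Q p mod m = x mod m" using gp(2) p(3) unfolding Lset_def by auto
      have "m dvd (x - gmin Q p)" using gm p(4) mod_eq_dvd_iff_nat[of "gmin Q p" x m] by simp
      then obtain k where k: "x - gmin Q p = m * k" by auto
      have xe: "x = gmin Q p + k * m" using k p(4) by (simp add: algebra_simps)
      have "x < f - m" using p(5) W_props(2) p(2) unfolding W_def by fastforce
      then show ?thesis using Qs_iter[OF QQ mf gp(1), of k] xe by simp
    qed
  qed
qed

lemma fiber_card:
  defines "W \<equiv> Wset f m (m + a)"
  assumes C: "C \<subseteq> W"
  shows "card {Q\<in>Qa. Q \<inter> W = C} \<le> (\<Prod>p\<in>C. card (Lset m (m + a) p))"
proof -
  let ?F = "{Q\<in>Qa. Q \<inter> W = C}"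
  let ?h = "\<lambda>Q. restrict (gmin Q) C"
  have fC: "finite C" using C unfolding W_def Wset_def by (auto intro: finite_subset)
  have inj: "inj_on ?h ?F"
  proof (rule inj_onI)
    fix Q1 Q2 assume q1: "Q1 \<in> ?F" and q2: "Q2 \<in> ?F" and e: "?h Q1 = ?h Q2"
    have "Rec f m C (gmin Q1) = Rec f m C (gmin Q2)"
    proof -
      have e': "restrict (gmin Q1) C = restrict (gmin Q2) C" using e by simp
      have "gmin Q1 p = gmin Q2 p" if "p \<in> C" for p
      proof -
        have "restrict (gmin Q1) C p = restrict (gmin Q2) C p" by (simp only: e')
        then show ?thesis using that by simp
      qed
      then have "\<forall>p\<in>C. gmin Q1 p = gmin Q2 p" by blast
      then show ?thesis unfolding Rec_def by auto
    qed
    then show "Q1 = Q2" using Q_rec[of Q1] Q_rec[of Q2] q1 q2 unfolding W_def by auto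
  qed
  have sub: "?h ` ?F \<subseteq> PiE C (Lset m (m + a))"
  proof
    fix g assume "g \<in> ?h ` ?F"
    then obtain Q where Q: "Q \<in> Qa" "Q \<inter> W = C" and g: "g = ?h Q" by auto
    show "g \<in> PiE C (Lset m (m + a))"
      unfolding g
    proof (rule restrict_PiE_iff[THEN iffD2], intro ballI)
      fix p assume p: "p \<in> C"
      have "p \<in> Q" "m + a \<le> p" using p Q W_props unfolding W_def by auto
      then show "gmin Q p \<in> Lset m (m + a) p" using gmin_props[OF Q(1)] by blast
    qed
  qed
  have fL: "finite (Lset m (m + a) p)" for p unfolding Lset_def by auto
  have "card ?F = card (?h ` ?F)" using card_image[OF inj] by simp
  also have "\<dots> \<le> card (PiE C (Lset m (m + a)))"
    by (rule card_mono[OF _ sub]) (simp add: fC fL finite_PiE)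
  also have "\<dots> = (\<Prod>p\<in>C. card (Lset m (m + a) p))" by (rule card_PiE[OF fC])
  finally show ?thesis .
qed

end


lemma sumL_bound:
  assumes mf: "2 * m < f" and a1: "a \<ge> 1" and at: "m + a \<le> f - m"
  shows "(\<Sum>p\<in>Wset f m (m + a). card (Lset m (m + a) p)) \<le> f - 2 * m - a"
proof -
  let ?W = "Wset f m (m + a)"
  have fW: "finite ?W" unfolding Wset_def by simp
  have fL: "\<And>p. finite (Lset m (m + a) p)" unfolding Lset_def by auto
  have dis: "\<And>p q. p \<in> ?W \<Longrightarrow> q \<in> ?W \<Longrightarrow> p \<noteq> q \<Longrightarrow> Lset m (m + a) p \<inter> Lset m (m + a) q = {}"
  proof -
    fix p q assume p: "p \<in> ?W" and q: "q \<in> ?W" and pq: "p \<noteq> q"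
    show "Lset m (m + a) p \<inter> Lset m (m + a) q = {}"
    proof (rule ccontr)
      assume "Lset m (m + a) p \<inter> Lset m (m + a) q \<noteq> {}"
      then have md: "p mod m = q mod m" unfolding Lset_def by auto
      have pr: "f - 2 * m < p" "p < f - m" "f - 2 * m < q" "q < f - m"
        using p q unfolding Wset_def by auto
      show False
      proof (cases "p < q")
        case True
        then have "p + m \<le> q" using mod_eq_far[OF md] by simp
        then show False using pr mf by linarith
      next
        case False
        then have "q < p" using pq by simp
        then have "q + m \<le> p" using mod_eq_far[OF md[symmetric]] by simp
        then show False using pr mf by linarith
      qed
    qed
  qed
  have "(\<Sum>p\<in>?W. card (Lset m (m + a) p)) = card (\<Union>p\<in>?W. Lset m (m + a) p)"
    by (rule card_UN_disjoint[symmetric]) (use fW fL dis in auto)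
  also have "\<dots> \<le> card {m + a..<f - m}"
    by (rule card_mono) (auto simp: Lset_def Wset_def)
  also have "\<dots> = f - 2 * m - a" by simp
  finally show ?thesis .
qed

lemma Qa_bound:
  assumes mf: "2 * m < f" and a1: "a \<ge> 1" and at: "a < f - 2 * m"
  shows "(\<Sum>Q\<in>Qa f m a. ((1::real)/2) ^ card (FF f m Q)) \<le> (7/5) ^ (f - 2 * m)"
proof -
  let ?W = "Wset f m (m + a)"
  let ?l = "\<lambda>p. card (Lset m (m + a) p)"
  let ?l' = "\<lambda>p. max 1 (?l p)"
  let ?w = "\<lambda>C. ((1::real)/2) ^ (card C + card (Eset a ?W C))"
  let ?h = "\<lambda>Q. Q \<inter> ?W"
  have fQa: "finite (Qa f m a)"
  proof -
    have "Qa f m a \<subseteq> Pow {..<f}" unfolding Qa_def[OF mf a1] Qs_def good_def by auto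
    then show ?thesis by (rule finite_subset) simp
  qed
  have fW: "finite ?W" unfolding Wset_def by simp
  have "(\<Sum>Q\<in>Qa f m a. ((1::real)/2) ^ card (FF f m Q)) \<le> (\<Sum>Q\<in>Qa f m a. ?w (?h Q))"
    by (rule sum_mono) (rule weight_bound[OF mf a1])
  also have "\<dots> = (\<Sum>C\<in>?h ` Qa f m a. \<Sum>Q\<in>{Q\<in>Qa f m a. ?h Q = C}. ?w (?h Q))"
    by (rule sum.group[symmetric]) (use fQa in auto)
  also have "\<dots> = (\<Sum>C\<in>?h ` Qa f m a. real (card {Q\<in>Qa f m a. ?h Q = C}) * ?w C)"
    by (rule sum.cong[OF refl]) simp
  also have "\<dots> \<le> (\<Sum>C\<in>?h ` Qa f m a. (\<Prod>p\<in>C. real (?l' p)) * ?w C)"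
  proof (rule sum_mono)
    fix C assume C: "C \<in> ?h ` Qa f m a"
    then have CW: "C \<subseteq> ?W" by auto
    have "card {Q\<in>Qa f m a. ?h Q = C} \<le> (\<Prod>p\<in>C. ?l p)"
      using fiber_card[OF mf a1 CW] by simp
    then have "real (card {Q\<in>Qa f m a. ?h Q = C}) \<le> real (\<Prod>p\<in>C. ?l p)"
      by (simp only: of_nat_le_iff)
    also have "\<dots> = (\<Prod>p\<in>C. real (?l p))" by simp
    also have "\<dots> \<le> (\<Prod>p\<in>C. real (?l' p))" by (rule prod_mono) auto
    finally show "real (card {Q\<in>Qa f m a. ?h Q = C}) * ?w C \<le> (\<Prod>p\<in>C. real (?l' p)) * ?w C"
      by (rule mult_right_mono) simp
  qed
  also have "\<dots> \<le> (\<Sum>C\<in>Pow ?W. (\<Prod>p\<in>C. real (?l' p)) * ?w C)"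
    by (rule sum_mono2) (use fW in \<open>auto intro!: mult_nonneg_nonneg prod_nonneg\<close>)
  also have "\<dots> = Tot a ?l' ?W" unfolding Tot_def wt_def Eset_def by simp
  also have "\<dots> \<le> (7/5) ^ ((\<Sum>p\<in>?W. ?l' p) + a)"
    unfolding Wset_def by (rule CT[OF a1]) simp
  also have "(\<Sum>p\<in>?W. ?l' p) = (\<Sum>p\<in>?W. ?l p)"
  proof (rule sum.cong[OF refl])
    fix p assume p: "p \<in> ?W"
    have "p \<in> Lset m (m + a) p" using p unfolding Wset_def Lset_def by auto
    then have "?l p \<ge> 1" using card_0_eq[of "Lset m (m + a) p"] unfolding Lset_def
      by (metis (no_types, lifting) One_nat_def Suc_leI empty_iff finite_nat_set_iff_bounded_le le_neq_implies_less mem_Collect_eq not_gr0)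
    then show "?l' p = ?l p" by simp
  qed
  also have "(7/5::real) ^ ((\<Sum>p\<in>?W. ?l p) + a) \<le> (7/5) ^ (f - 2 * m)"
  proof (rule power_increasing)
    have "(\<Sum>p\<in>?W. ?l p) \<le> f - 2 * m - a" by (rule sumL_bound[OF mf a1]) (use at in simp)
    then show "(\<Sum>p\<in>?W. ?l p) + a \<le> f - 2 * m" using at by simp
  qed simp
  finally show ?thesis .
qed

lemma Qs_bound:
  assumes mf: "2 * m < f"
  shows "(\<Sum>Q\<in>Qs f m. ((1::real)/2) ^ card (FF f m Q)) \<le> 1 + real (f - 2 * m) * (7/5) ^ (f - 2 * m)"
proof -
  let ?t = "f - 2 * m"
  let ?key = "\<lambda>Q. if Q = {m} then 0 else Min (Q - {m}) - m"
  let ?w = "\<lambda>Q. ((1::real)/2) ^ card (FF f m Q)"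
  have fQs: "finite (Qs f m)"
  proof -
    have "Qs f m \<subseteq> Pow {..<f}" unfolding Qs_def good_def by auto
    then show ?thesis by (rule finite_subset) simp
  qed
  have key_range: "?key Q \<in> {0..<?t}" if Q: "Q \<in> Qs f m" for Q
  proof (cases "Q = {m}")
    case True then show ?thesis using mf by simp
  next
    case False
    note qp = Qs_props[OF Q mf]
    have fQ: "finite Q" using qp(2) finite_subset by blast
    have ne: "Q - {m} \<noteq> {}" using False qp(1) by auto
    have "Min (Q - {m}) \<in> Q - {m}" using Min_in[of "Q - {m}"] fQ ne by auto
    then have "m < Min (Q - {m})" "Min (Q - {m}) < f - m" using qp(2) by auto
    then show ?thesis using False by auto
  qed
  have img: "?key ` Qs f m \<subseteq> {0..<?t}" using key_range by blast
  have "(\<Sum>Q\<in>Qs f m. ?w Q) = (\<Sum>a\<in>{0..<?t}. \<Sum>Q\<in>{Q\<in>Qs f m. ?key Q = a}. ?w Q)"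
    by (rule sum.group[OF fQs _ img, symmetric]) simp
  also have "\<dots> = (\<Sum>Q\<in>{Q\<in>Qs f m. ?key Q = 0}. ?w Q) + (\<Sum>a\<in>{1..<?t}. \<Sum>Q\<in>{Q\<in>Qs f m. ?key Q = a}. ?w Q)"
  proof -
    have "{0..<?t} = insert 0 {1..<?t}" using mf by auto
    then show ?thesis by simp
  qed
  also have "\<dots> \<le> 1 + (\<Sum>a\<in>{1..<?t}. (7/5::real) ^ ?t)"
  proof (rule add_mono)
    have sub: "{Q\<in>Qs f m. ?key Q = 0} \<subseteq> {{m}}"
    proof
      fix Q assume Q: "Q \<in> {Q\<in>Qs f m. ?key Q = 0}"
      show "Q \<in> {{m}}"
      proof (rule ccontr)
        assume "Q \<notin> {{m}}"
        then have ne: "Q \<noteq> {m}" by simp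
        note qp = Qs_props[OF _ mf, of Q]
        have fQ: "finite Q" using qp(2) Q finite_subset by blast
        have ne': "Q - {m} \<noteq> {}" using ne qp(1) Q by auto
        have "Min (Q - {m}) \<in> Q - {m}" using Min_in[of "Q - {m}"] fQ ne' by auto
        then have "m < Min (Q - {m})" using qp(2) Q by auto
        then show False using Q ne by simp
      qed
    qed
    have "(\<Sum>Q\<in>{Q\<in>Qs f m. ?key Q = 0}. ?w Q) \<le> (\<Sum>Q\<in>{{m}}. ?w Q)"
      by (rule sum_mono2[OF _ sub]) auto
    also have "\<dots> \<le> 1" by (simp add: power_le_one)
    finally show "(\<Sum>Q\<in>{Q\<in>Qs f m. ?key Q = 0}. ?w Q) \<le> 1" .
  next
    show "(\<Sum>a\<in>{1..<?t}. \<Sum>Q\<in>{Q\<in>Qs f m. ?key Q = a}. ?w Q) \<le> (\<Sum>a\<in>{1..<?t}. (7/5::real) ^ ?t)"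
    proof (rule sum_mono)
      fix a assume a: "a \<in> {1..<?t}"
      have a1: "a \<ge> 1" and at: "a < ?t" using a by auto
      have "{Q\<in>Qs f m. ?key Q = a} = Qa f m a"
        unfolding Qa_def[OF mf a1]
      proof (intro equalityI subsetI)
        fix Q assume Q: "Q \<in> {Q\<in>Qs f m. ?key Q = a}"
        then have ne: "Q \<noteq> {m}" using a1 by (auto split: if_splits)
        note qp = Qs_props[OF _ mf, of Q]
        have fQ: "finite Q" using qp(2) Q finite_subset by blast
        have ne': "Q - {m} \<noteq> {}" using ne qp(1) Q by auto
        have "Min (Q - {m}) \<in> Q - {m}" using Min_in[of "Q - {m}"] fQ ne' by auto
        then have "m < Min (Q - {m})" using qp(2) Q by auto
        then show "Q \<in> {Q\<in>Qs f m. Q \<noteq> {m} \<and> Min (Q - {m}) = m + a}" using Q ne by auto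
      next
        fix Q assume "Q \<in> {Q\<in>Qs f m. Q \<noteq> {m} \<and> Min (Q - {m}) = m + a}"
        then show "Q \<in> {Q\<in>Qs f m. ?key Q = a}" by auto
      qed
      then show "(\<Sum>Q\<in>{Q\<in>Qs f m. ?key Q = a}. ?w Q) \<le> (7/5) ^ ?t"
        using Qa_bound[OF mf a1 at] by simp
    qed
  qed
  also have "\<dots> \<le> 1 + real ?t * (7/5) ^ ?t" by simp
  finally show ?thesis .
qed


lemma decomp:
  fixes g :: "nat \<Rightarrow> real"
  assumes k1: "k \<ge> 1" and e1: "e \<le> 1" and f: "f = 2 * k + e"
  shows "(\<Sum>m\<in>{1..f+1}. g m) = (\<Sum>j<k. g (k - j)) + (\<Sum>i<k+e-1. g (k+1+i)) + g f + g (f+1)"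
proof -
  have i1: "{1..f+1} = {1..<f+2}" by auto
  have s1: "(\<Sum>m\<in>{1..<f+2}. g m) = (\<Sum>m\<in>{1..<k+1}. g m) + (\<Sum>m\<in>{k+1..<f+2}. g m)"
    by (rule sum.atLeastLessThan_concat[symmetric]) (use f in auto)
  have s2: "(\<Sum>m\<in>{k+1..<f+2}. g m) = (\<Sum>m\<in>{k+1..<f}. g m) + (\<Sum>m\<in>{f..<f+2}. g m)"
    by (rule sum.atLeastLessThan_concat[symmetric]) (use f k1 in auto)
  have s3: "(\<Sum>m\<in>{f..<f+2}. g m) = g f + g (f+1)"
  proof -
    have "{f..<f+2} = {f, f+1}" by auto
    then show ?thesis by simp
  qed
  have r1: "(\<Sum>m\<in>{1..<k+1}. g m) = (\<Sum>j<k. g (k - j))"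
    by (rule sum.reindex_bij_witness[where j="\<lambda>m. k - m" and i="\<lambda>j. k - j"]) auto
  have r2: "(\<Sum>m\<in>{k+1..<f}. g m) = (\<Sum>i<k+e-1. g (k+1+i))"
    by (rule sum.reindex_bij_witness[where j="\<lambda>m. m - (k+1)" and i="\<lambda>i. k+1+i"]) (use f k1 in auto)
  show ?thesis unfolding i1 s1 s2 s3 r1 r2 by simp
qed

lemma Af_low_bound:
  assumes e1: "e \<le> 1" and jk: "j < k"
  shows "real (Af (2 * k + e) (k - j)) / 2 ^ k \<le> (1 + real (2 * j + e) * (7/5) ^ (2 * j + e)) / 2 ^ (j + 1)"
proof (cases "2 * j + e = 0")
  case True
  then have "2 * (k - j) = 2 * k + e" by simp
  then have "Af (2 * k + e) (k - j) = 0" by (rule Af_half) (use jk in simp)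
  then show ?thesis by simp
next
  case False
  let ?f = "2 * k + e" and ?m = "k - j"
  have mf: "2 * ?m < ?f" using False jk by arith
  have m1: "?m \<ge> 1" using jk by simp
  have t: "?f - 2 * ?m = 2 * j + e" using jk by simp
  have "real (Af ?f ?m) \<le> 2 ^ (?m - 1) * (1 + real (2 * j + e) * (7/5) ^ (2 * j + e))"
    unfolding Af_formula[OF mf m1] using Qs_bound[OF mf] unfolding t
    by (intro mult_left_mono) auto
  moreover have "(2::real) ^ (?m - 1) / 2 ^ k = 1 / 2 ^ (j + 1)"
  proof -
    have "k = (?m - 1) + (j + 1)" using jk by simp
    then have "(2::real) ^ k = 2 ^ (?m - 1) * 2 ^ (j + 1)" by (metis power_add)
    then show ?thesis by simp
  qed
  ultimately show ?thesis by (simp add: divide_right_mono[of _ _ "2^k", simplified] field_simps)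
qed

lemma Af_low_limit:
  assumes e1: "e \<le> 1" and jk: "3 * j + e < k"
  shows "real (Af (2 * k + e) (k - j)) / 2 ^ k = psi (2 * j + e) / 2 ^ (j + 1)"
proof (cases "2 * j + e = 0")
  case True
  then have "2 * (k - j) = 2 * k + e" by simp
  then have "Af (2 * k + e) (k - j) = 0" by (rule Af_half) (use jk in simp)
  then show ?thesis using True psi_0 by simp
next
  case False
  let ?f = "2 * k + e" and ?m = "k - j"
  have mf: "2 * ?m < ?f" using False jk by arith
  have f3: "?f < 3 * ?m" using jk by simp
  have t: "?f - 2 * ?m = 2 * j + e" using jk by simp
  have "(2::real) ^ (?m - 1) / 2 ^ k = 1 / 2 ^ (j + 1)"
  proof -
    have "k = (?m - 1) + (j + 1)" using jk by simp
    then have "(2::real) ^ k = 2 ^ (?m - 1) * 2 ^ (j + 1)" by (metis power_add)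
    then show ?thesis by simp
  qed
  then show ?thesis unfolding Af_middle[OF mf f3] t by (simp add: field_simps)
qed

lemma Af_up_val:
  assumes e1: "e \<le> 1" and ik: "i < k + e - 1"
  shows "real (Af (2 * k + e) (k + 1 + i)) / 2 ^ k = 2 ^ e / 2 ^ (i + 2)"
proof -
  have "Af (2 * k + e) (k + 1 + i) = 2 ^ (2 * k + e - (k + 1 + i) - 1)"
    by (rule Af_upper) (use ik e1 in auto)
  moreover have "2 * k + e - (k + 1 + i) - 1 + (i + 2) = k + e" using ik by simp
  then have "(2::real) ^ (2 * k + e - (k + 1 + i) - 1) * 2 ^ (i + 2) = 2 ^ k * 2 ^ e"
    by (metis power_add)
  ultimately show ?thesis by (simp add: field_simps)
qed


lemma tann:
  fixes a :: "nat \<Rightarrow> nat \<Rightarrow> real"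
  assumes lim: "\<And>j. (\<lambda>k. a j k) \<longlonglongrightarrow> b j" and bd: "\<And>j k. \<bar>a j k\<bar> \<le> M j" and sM: "summable M"
  shows "summable b \<and> (\<lambda>k. suminf (\<lambda>j. a j k)) \<longlonglongrightarrow> suminf b"
proof -
  have ev: "eventually (\<lambda>(j, k). norm (a j k) \<le> M j) (at_top \<times>\<^sub>F sequentially)"
    by (rule always_eventually) (use bd in auto)
  have T: "eventually (\<lambda>n. summable (\<lambda>k. norm (a k n))) sequentially \<and>
           summable (\<lambda>n. norm (b n)) \<and> ((\<lambda>n. suminf (\<lambda>k. a k n)) \<longlonglongrightarrow> suminf b)"
    by (rule tannerys_theorem[OF lim ev sM]) simp
  then show ?thesis using summable_norm_cancel by blast
qed

lemma summS: "summable (\<lambda>n. (real n + 1) ^ 2 * (49/50) ^ n)"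
proof -
  let ?r = "((201/200::real) ^ 2 * (49/50))"
  have r1: "norm ?r < 1" by (simp add: power2_eq_square)
  have sg: "summable (\<lambda>n. 40000 * ?r ^ n)" by (rule summable_mult[OF summable_geometric[OF r1]])
  have bd: "norm ((real n + 1) ^ 2 * (49/50) ^ n) \<le> 40000 * ?r ^ n" for n
  proof -
    have B: "1 + real n * (1/200) \<le> (1 + 1/200::real) ^ n" by (rule Bernoulli_inequality) simp
    have "real n + 1 \<le> 200 * (201/200::real) ^ n" using B by simp
    then have "(real n + 1) ^ 2 \<le> (200 * (201/200::real) ^ n) ^ 2"
      by (rule power_mono) simp
    also have "\<dots> = 40000 * ((201/200) ^ 2) ^ n" by (simp add: power_mult_distrib power_mult[symmetric] mult.commute)
    finally have "(real n + 1) ^ 2 * (49/50) ^ n \<le> 40000 * ((201/200) ^ 2) ^ n * (49/50) ^ n"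
      by (rule mult_right_mono) simp
    also have "\<dots> = 40000 * ?r ^ n" by (simp only: power_mult_distrib mult.assoc)
    finally show ?thesis by simp
  qed
  show ?thesis by (rule summable_comparison_test'[OF sg]) (use bd in auto)
qed

lemma low_dom:
  assumes e1: "e \<le> 1"
  shows "(real j + 1) * ((1 + real (2 * j + e) * (7/5) ^ (2 * j + e)) / 2 ^ (j + 1))
         \<le> (7/5) * ((real j + 1) ^ 2 * (49/50) ^ j)"
proof -
  let ?g = "7/5::real"
  have p1: "?g ^ (2 * j + e) \<le> ?g ^ (2 * j + 1)" by (rule power_increasing) (use e1 in auto)
  have p2: "1 \<le> ?g ^ (2 * j + 1)" by (rule one_le_power) simp
  have "real (2 * j + e) \<le> 2 * real j + 1" using e1 by simp
  then have "1 + real (2 * j + e) * ?g ^ (2 * j + e) \<le> 1 + (2 * real j + 1) * ?g ^ (2 * j + 1)"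
    using p1 by (intro add_left_mono mult_mono) auto
  also have "\<dots> \<le> (2 * real j + 2) * ?g ^ (2 * j + 1)"
  proof -
    have aux: "1 + (2 * x + 1) * G \<le> (2 * x + 2) * G" if "1 \<le> G" for x G :: real
      using that by (simp add: algebra_simps)
    show ?thesis by (rule aux[OF p2])
  qed
  also have "\<dots> = 2 * (real j + 1) * ?g * (49/25) ^ j"
  proof -
    have "?g ^ (2 * j + 1) = ?g * (?g ^ 2) ^ j" by (simp add: power_add power_mult)
    also have "?g ^ 2 = 49/25" by (simp add: power2_eq_square)
    finally have g2: "?g ^ (2 * j + 1) = ?g * (49/25) ^ j" .
    show ?thesis unfolding g2 by (simp add: algebra_simps)
  qed
  finally have h: "1 + real (2 * j + e) * ?g ^ (2 * j + e) \<le> 2 * (real j + 1) * ?g * (49/25) ^ j" .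
  have "(real j + 1) * ((1 + real (2 * j + e) * ?g ^ (2 * j + e)) / 2 ^ (j + 1))
        \<le> (real j + 1) * ((2 * (real j + 1) * ?g * (49/25) ^ j) / 2 ^ (j + 1))"
    using h by (intro mult_left_mono divide_right_mono) auto
  also have "\<dots> = ?g * ((real j + 1) ^ 2 * ((49/25) ^ j / 2 ^ j))"
    by (simp add: power2_eq_square field_simps)
  also have "(49/25::real) ^ j / 2 ^ j = (49/50) ^ j"
    by (simp add: power_divide[symmetric])
  finally show ?thesis by simp
qed


lemma good_empty: "good f {}" unfolding good_def by simp

lemma card_good_pos: "card {P. good f P} > 0"
  using finite_good good_empty by (metis card_gt_0_iff empty_iff mem_Collect_eq)

lemma main_conv:
  assumes e1: "e \<le> 1"
  shows "\<exists>\<mu>. (\<lambda>k. expected_multiplicity (2*k+e) - real (2*k+e) / 2) \<longlonglongrightarrow> \<mu>"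
proof -
  define lowA where "lowA j k = (if j < k then real (Af (2*k+e) (k-j)) / 2^k else 0)" for j k :: nat
  define lowB where "lowB j = psi (2*j+e) / 2^(j+1)" for j :: nat
  define lowA' where "lowA' j k = -(real j + real e/2) * lowA j k" for j k :: nat
  define lowB' where "lowB' j = -(real j + real e/2) * lowB j" for j :: nat
  define upA where "upA i k = (if i < k + e - 1 then real (Af (2*k+e) (k+1+i)) / 2^k else 0)" for i k :: nat
  define upB where "upB i = (2::real)^e / 2^(i+2)" for i :: nat
  define upA' where "upA' i k = (real i + 1 - real e/2) * upA i k" for i k :: nat
  define upB' where "upB' i = (real i + 1 - real e/2) * upB i" for i :: nat
  define M where "M j = (7/5) * ((real j + 1)^2 * (49/50::real)^j)" for j :: nat
  have sM: "summable M" unfolding M_def by (rule summable_mult[OF summS])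
  have limA: "(\<lambda>k. lowA j k) \<longlonglongrightarrow> lowB j" for j
  proof -
    have "eventually (\<lambda>k. lowB j = lowA j k) sequentially"
      unfolding eventually_sequentially
    proof (intro exI allI impI)
      fix k assume "3 * j + e + 1 \<le> k"
      then have "3 * j + e < k" "j < k" by auto
      then show "lowB j = lowA j k" unfolding lowA_def lowB_def using Af_low_limit[OF e1] by simp
    qed
    then show ?thesis using tendsto_cong[of "\<lambda>k. lowB j" "\<lambda>k. lowA j k"] by auto
  qed
  have limA': "(\<lambda>k. lowA' j k) \<longlonglongrightarrow> lowB' j" for j
    unfolding lowA'_def lowB'_def by (rule tendsto_mult_left[OF limA])
  have limU: "(\<lambda>k. upA i k) \<longlonglongrightarrow> upB i" for i
  proof -
    have "eventually (\<lambda>k. upB i = upA i k) sequentially"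
      unfolding eventually_sequentially
    proof (intro exI allI impI)
      fix k assume "i + 2 \<le> k"
      then have ik: "i < k + e - 1" by auto
      then show "upB i = upA i k" unfolding upA_def upB_def using Af_up_val[OF e1 ik] by simp
    qed
    then show ?thesis using tendsto_cong[of "\<lambda>k. upB i" "\<lambda>k. upA i k"] by auto
  qed
  have limU': "(\<lambda>k. upA' i k) \<longlonglongrightarrow> upB' i" for i
    unfolding upA'_def upB'_def by (rule tendsto_mult_left[OF limU])
  have B0: "\<bar>lowA j k\<bar> \<le> (real j + 1) * ((1 + real (2 * j + e) * (7/5) ^ (2 * j + e)) / 2 ^ (j + 1))" for j k
  proof -
    have nn: "0 \<le> (1 + real (2 * j + e) * (7/5::real) ^ (2 * j + e)) / 2 ^ (j + 1)" by simp
    have "\<bar>lowA j k\<bar> \<le> (1 + real (2 * j + e) * (7/5) ^ (2 * j + e)) / 2 ^ (j + 1)"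
      unfolding lowA_def using Af_low_bound[OF e1] nn by auto
    also have "\<dots> \<le> (real j + 1) * ((1 + real (2 * j + e) * (7/5) ^ (2 * j + e)) / 2 ^ (j + 1))"
      using mult_right_mono[of 1 "real j + 1", OF _ nn] by simp
    finally show ?thesis .
  qed
  have bdA: "\<bar>lowA j k\<bar> \<le> M j" for j k
    using B0[of j k] low_dom[OF e1, of j] unfolding M_def by linarith
  have bdA': "\<bar>lowA' j k\<bar> \<le> M j" for j k
  proof -
    have c: "\<bar>-(real j + real e/2)\<bar> \<le> real j + 1" using e1 by simp
    have "\<bar>lowA' j k\<bar> = \<bar>-(real j + real e/2)\<bar> * \<bar>lowA j k\<bar>" unfolding lowA'_def by (simp add: abs_mult)
    also have "\<dots> \<le> (real j + 1) * ((1 + real (2 * j + e) * (7/5) ^ (2 * j + e)) / 2 ^ (j + 1))"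
    proof -
      have "\<bar>lowA j k\<bar> \<le> (1 + real (2 * j + e) * (7/5) ^ (2 * j + e)) / 2 ^ (j + 1)"
        unfolding lowA_def using Af_low_bound[OF e1] by auto
      then show ?thesis by (rule mult_mono[OF c]) auto
    qed
    also have "\<dots> \<le> M j" using low_dom[OF e1, of j] unfolding M_def by simp
    finally show ?thesis .
  qed
  have geo: "(1/2::real) ^ (i + 1) \<le> (49/50) ^ i" for i :: nat
  proof -
    have "(1/2::real) ^ (i + 1) \<le> (1/2) ^ i" by (rule power_decreasing) auto
    also have "\<dots> \<le> (49/50) ^ i" by (rule power_mono) auto
    finally show ?thesis .
  qed
  have hsq: "real i + 1 \<le> (7/5) * (real i + 1) ^ 2" for i :: nat
  proof -
    have "(real i + 1) * 1 \<le> (real i + 1) * (real i + 1)" by (intro mult_left_mono) auto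
    then have "real i + 1 \<le> (real i + 1) ^ 2" by (simp add: power2_eq_square)
    moreover have "0 \<le> (real i + 1) ^ 2" by simp
    ultimately show ?thesis by linarith
  qed
  have upv: "\<bar>upA i k\<bar> \<le> (1/2) ^ (i + 1)" for i k
  proof -
    have "\<bar>upA i k\<bar> \<le> upB i"
      unfolding upA_def upB_def using Af_up_val[OF e1] by auto
    also have "upB i \<le> (1/2) ^ (i + 1)"
    proof -
      have "(2::real) ^ e \<le> 2" using e1 by (cases e) auto
      then have "(2::real) ^ e / 2 ^ (i + 2) \<le> 2 / 2 ^ (i + 2)" by (rule divide_right_mono) simp
      also have "(2::real) / 2 ^ (i + 2) = (1/2) ^ (i + 1)" by (simp add: power_one_over)
      finally show ?thesis unfolding upB_def .
    qed
    finally show ?thesis .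
  qed
  have bdU': "\<bar>upA' i k\<bar> \<le> M i" for i k
  proof -
    have c: "\<bar>real i + 1 - real e/2\<bar> \<le> real i + 1" using e1 by simp
    have "\<bar>upA' i k\<bar> = \<bar>real i + 1 - real e/2\<bar> * \<bar>upA i k\<bar>" unfolding upA'_def by (simp add: abs_mult)
    also have "\<dots> \<le> (real i + 1) * (49/50) ^ i"
      using upv[of i k] geo[of i] by (intro mult_mono[OF c]) auto
    also have "\<dots> \<le> (7/5) * (real i + 1) ^ 2 * (49/50) ^ i"
      by (rule mult_right_mono[OF hsq]) simp
    finally show ?thesis unfolding M_def by simp
  qed
  have bdU: "\<bar>upA i k\<bar> \<le> M i" for i k
  proof -
    have "\<bar>upA i k\<bar> \<le> (49/50) ^ i" using upv[of i k] geo[of i] by linarith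
    also have "(49/50::real) ^ i \<le> (real i + 1) * (49/50) ^ i"
      using mult_right_mono[of 1 "real i + 1" "(49/50::real) ^ i"] by simp
    also have "\<dots> \<le> (7/5) * (real i + 1) ^ 2 * (49/50) ^ i"
      by (rule mult_right_mono[OF hsq]) simp
    finally show ?thesis unfolding M_def by simp
  qed
  note TA = tann[OF limA bdA sM] and TA' = tann[OF limA' bdA' sM]
   and TU = tann[OF limU bdU sM] and TU' = tann[OF limU' bdU' sM]
  define Den where "Den k = real (card {P. good (2*k+e) P}) / 2^k" for k :: nat
  define Num where "Num k = (\<Sum>P\<in>{P. good (2*k+e) P}. real (mu (2*k+e) P) - real (2*k+e)/2) / 2^k" for k :: nat
  have Den_eq: "Den k = suminf (\<lambda>j. lowA j k) + suminf (\<lambda>i. upA i k) + (1/2)^k" if k1: "k \<ge> 1" for k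
  proof -
    let ?f = "2*k+e"
    let ?g = "\<lambda>m. real (Af ?f m) / 2^k"
    have cs: "card {P. good ?f P} = (\<Sum>m\<in>{1..?f+1}. Af ?f m)"
      using card_good_sum[of ?f] k1 by simp
    have "Den k = (\<Sum>m\<in>{1..?f+1}. real (Af ?f m)) / 2^k"
      unfolding Den_def cs by simp
    also have "\<dots> = (\<Sum>m\<in>{1..?f+1}. ?g m)" by (rule sum_divide_distrib)
    also have "\<dots> = (\<Sum>j<k. ?g (k - j)) + (\<Sum>i<k+e-1. ?g (k+1+i)) + ?g ?f + ?g (?f+1)"
      by (rule decomp[OF k1 e1 refl])
    also have "(\<Sum>j<k. ?g (k - j)) = suminf (\<lambda>j. lowA j k)"
    proof -
      have "(\<Sum>j<k. ?g (k - j)) = (\<Sum>j<k. lowA j k)" by (rule sum.cong) (auto simp: lowA_def)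
      also have "\<dots> = suminf (\<lambda>j. lowA j k)" by (rule suminf_finite[symmetric]) (auto simp: lowA_def)
      finally show ?thesis .
    qed
    also have "(\<Sum>i<k+e-1. ?g (k+1+i)) = suminf (\<lambda>i. upA i k)"
    proof -
      have "(\<Sum>i<k+e-1. ?g (k+1+i)) = (\<Sum>i<k+e-1. upA i k)" by (rule sum.cong) (auto simp: upA_def)
      also have "\<dots> = suminf (\<lambda>i. upA i k)" by (rule suminf_finite[symmetric]) (auto simp: upA_def)
      finally show ?thesis .
    qed
    also have "?g ?f = 0" using Af_f by simp
    also have "?g (?f+1) = (1/2)^k" using Af_top by (simp add: power_one_over)
    finally show ?thesis by simp
  qed
  have Num_eq: "Num k = suminf (\<lambda>j. lowA' j k) + suminf (\<lambda>i. upA' i k) + (real (2*k+e)/2 + 1) * (1/2)^k"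
    if k1: "k \<ge> 1" for k
  proof -
    let ?f = "2*k+e"
    let ?g = "\<lambda>m. (real m - real ?f/2) * real (Af ?f m) / 2^k"
    have sm: "(\<Sum>P\<in>{P. good ?f P}. real (mu ?f P) - real ?f/2) = (\<Sum>m\<in>{1..?f+1}. (real m - real ?f/2) * real (Af ?f m))"
      by (rule sum_mu_eq) (use k1 in simp)
    have "Num k = (\<Sum>m\<in>{1..?f+1}. (real m - real ?f/2) * real (Af ?f m)) / 2^k"
      unfolding Num_def sm ..
    also have "\<dots> = (\<Sum>m\<in>{1..?f+1}. ?g m)" by (rule sum_divide_distrib)
    also have "\<dots> = (\<Sum>j<k. ?g (k - j)) + (\<Sum>i<k+e-1. ?g (k+1+i)) + ?g ?f + ?g (?f+1)"
      by (rule decomp[OF k1 e1 refl])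
    also have "(\<Sum>j<k. ?g (k - j)) = suminf (\<lambda>j. lowA' j k)"
    proof -
      have "(\<Sum>j<k. ?g (k - j)) = (\<Sum>j<k. lowA' j k)"
      proof (rule sum.cong[OF refl])
        fix j assume j: "j \<in> {..<k}"
        then have "real (k - j) - real ?f / 2 = -(real j + real e / 2)" by (simp add: of_nat_diff field_simps)
        then show "?g (k - j) = lowA' j k" unfolding lowA'_def lowA_def using j by simp
      qed
      also have "\<dots> = suminf (\<lambda>j. lowA' j k)"
        by (rule suminf_finite[symmetric]) (auto simp: lowA'_def lowA_def)
      finally show ?thesis .
    qed
    also have "(\<Sum>i<k+e-1. ?g (k+1+i)) = suminf (\<lambda>i. upA' i k)"
    proof -
      have "(\<Sum>i<k+e-1. ?g (k+1+i)) = (\<Sum>i<k+e-1. upA' i k)"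
      proof (rule sum.cong[OF refl])
        fix i assume i: "i \<in> {..<k+e-1}"
        have "real (k + 1 + i) - real ?f / 2 = real i + 1 - real e / 2" by (simp add: field_simps)
        then show "?g (k + 1 + i) = upA' i k" unfolding upA'_def upA_def using i by simp
      qed
      also have "\<dots> = suminf (\<lambda>i. upA' i k)"
        by (rule suminf_finite[symmetric]) (auto simp: upA'_def upA_def)
      finally show ?thesis .
    qed
    also have "?g ?f = 0" using Af_f by simp
    also have "?g (?f+1) = (real ?f/2 + 1) * (1/2)^k" using Af_top
      by (simp add: power_one_over field_simps)
    finally show ?thesis by simp
  qed
  have E_eq: "expected_multiplicity (2*k+e) - real (2*k+e) / 2 = Num k / Den k" if k1: "k \<ge> 1" for k
  proof -
    let ?f = "2*k+e" and ?G = "{P. good (2*k+e) P}"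
    have c0: "real (card ?G) > 0" using card_good_pos by simp
    have "(\<Sum>P\<in>?G. real (mu ?f P) - real ?f/2) = (\<Sum>P\<in>?G. real (mu ?f P)) - real (card ?G) * (real ?f/2)"
      by (simp add: sum_subtractf)
    moreover have aux1: "(x / z) / (y / z) = x / y" if "z \<noteq> 0" for x y z :: real
      using that by (simp add: field_simps)
    ultimately have "Num k / Den k = ((\<Sum>P\<in>?G. real (mu ?f P)) - real (card ?G) * (real ?f/2)) / real (card ?G)"
      unfolding Num_def Den_def by simp
    also have "\<dots> = (\<Sum>P\<in>?G. real (mu ?f P)) / real (card ?G) - real ?f / 2"
    proof -
      have aux2: "(T - c * F) / c = T / c - F" if "c \<noteq> 0" for T c F :: real
        using that by (simp add: field_simps)
      show ?thesis by (rule aux2) (use c0 in simp)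
    qed
    also have "\<dots> = expected_multiplicity ?f - real ?f / 2"
      using expected_eq[of ?f] k1 by simp
    finally show ?thesis by simp
  qed
  have z1: "(\<lambda>k. (1/2::real)^k) \<longlonglongrightarrow> 0" by (rule LIMSEQ_realpow_zero) auto
  have z2: "(\<lambda>k. (real (2*k+e)/2 + 1) * (1/2::real)^k) \<longlonglongrightarrow> 0"
  proof (rule tendsto_sandwich[of "\<lambda>_. 0" _ _ "\<lambda>k. 2 * ((real k + 1) ^ 2 * (49/50) ^ k)"])
    show "eventually (\<lambda>k. 0 \<le> (real (2*k+e)/2 + 1) * (1/2::real)^k) sequentially" by simp
    show "eventually (\<lambda>k. (real (2*k+e)/2 + 1) * (1/2::real)^k \<le> 2 * ((real k + 1) ^ 2 * (49/50) ^ k)) sequentially"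
    proof (rule always_eventually, intro allI)
      fix k :: nat
      have re: "real e \<le> 1" using e1 by simp
      have a1: "real (2*k+e)/2 + 1 \<le> real k + 2" using re by simp
      have "(real k + 1) * 1 \<le> (real k + 1) * (real k + 1)" by (intro mult_left_mono) auto
      then have a2: "real k + 1 \<le> (real k + 1) ^ 2" by (simp add: power2_eq_square)
      have a: "real (2*k+e)/2 + 1 \<le> 2 * (real k + 1) ^ 2" using a1 a2 by linarith
      have b: "(1/2::real)^k \<le> (49/50)^k" by (rule power_mono) auto
      have "(real (2*k+e)/2 + 1) * (1/2::real)^k \<le> (2 * (real k + 1) ^ 2) * (49/50)^k"
        by (rule mult_mono[OF a b]) auto
      then show "(real (2*k+e)/2 + 1) * (1/2::real)^k \<le> 2 * ((real k + 1) ^ 2 * (49/50) ^ k)" by simp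
    qed
    show "(\<lambda>k. 0::real) \<longlonglongrightarrow> 0" by simp
    show "(\<lambda>k. 2 * ((real k + 1) ^ 2 * (49/50::real) ^ k)) \<longlonglongrightarrow> 0"
      using tendsto_mult_left[OF summable_LIMSEQ_zero[OF summS], of 2] by simp
  qed
  define LD where "LD = suminf lowB + suminf upB + 0"
  define LN where "LN = suminf lowB' + suminf upB' + 0"
  have DL: "(\<lambda>k. suminf (\<lambda>j. lowA j k) + suminf (\<lambda>i. upA i k) + (1/2)^k) \<longlonglongrightarrow> LD"
    unfolding LD_def using TA TU z1 by (intro tendsto_add) auto
  have NL: "(\<lambda>k. suminf (\<lambda>j. lowA' j k) + suminf (\<lambda>i. upA' i k) + (real (2*k+e)/2 + 1) * (1/2)^k) \<longlonglongrightarrow> LN"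
    unfolding LN_def using TA' TU' z2 by (intro tendsto_add) auto
  have ev1: "eventually (\<lambda>k. suminf (\<lambda>j. lowA j k) + suminf (\<lambda>i. upA i k) + (1/2)^k = Den k) sequentially"
    unfolding eventually_sequentially using Den_eq by (intro exI[of _ 1]) auto
  have ev2: "eventually (\<lambda>k. suminf (\<lambda>j. lowA' j k) + suminf (\<lambda>i. upA' i k) + (real (2*k+e)/2 + 1) * (1/2)^k = Num k) sequentially"
    unfolding eventually_sequentially using Num_eq by (intro exI[of _ 1]) auto
  have DL': "Den \<longlonglongrightarrow> LD" using tendsto_cong[OF ev1] DL by simp
  have NL': "Num \<longlonglongrightarrow> LN" using tendsto_cong[OF ev2] NL by simp
  have LDpos: "LD \<noteq> 0"
  proof -
    have sB: "summable lowB" using TA by simp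
    have sU: "summable upB" using TU by simp
    have "0 \<le> suminf lowB"
      by (rule suminf_nonneg[OF sB]) (simp add: lowB_def psi_nonneg)
    moreover have "upB 0 \<le> suminf upB"
      using sum_le_suminf[OF sU, of "{0}"] by (simp add: upB_def)
    moreover have "upB 0 > 0" by (simp add: upB_def)
    ultimately show ?thesis unfolding LD_def by linarith
  qed
  have lim: "(\<lambda>k. Num k / Den k) \<longlonglongrightarrow> LN / LD" by (rule tendsto_divide[OF NL' DL' LDpos])
  have ev3: "eventually (\<lambda>k. Num k / Den k = expected_multiplicity (2*k+e) - real (2*k+e) / 2) sequentially"
    unfolding eventually_sequentially using E_eq by (intro exI[of _ 1]) auto
  have "(\<lambda>k. expected_multiplicity (2*k+e) - real (2*k+e) / 2) \<longlonglongrightarrow> LN / LD"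
    using tendsto_cong[OF ev3] lim by blast
  then show ?thesis by blast
qed

theorem corollary5p3:
  shows "\<exists>\<mu>0 \<mu>1 :: real.
     ((\<lambda>k. expected_multiplicity (2*k) - real (2*k) / 2) \<longlonglongrightarrow> \<mu>0) \<and>
     ((\<lambda>k. expected_multiplicity (2*k+1) - real (2*k+1) / 2) \<longlonglongrightarrow> \<mu>1)"
  using main_conv[of 0] main_conv[of 1] by auto


end
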